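(* Let $(V,g)$ be a Euclidean vector space of dimension $4$. Let $R$ be an algebraic curvature tensor on $V$ and $\mathring{R}$ its induced curvature operator of the second kind. (1) If $\mathring{R}\in\mathcal{C}(\alpha,1)$ with $1\le\alpha\le3$, or $\mathring{R}\in\mathcal{C}(\alpha,9\alpha^{-1}-2)$ with $3\le\alpha<9$, then $R$ has nonnegative isotropic curvature. (2) If $\mathring{R}\in\mathring{\mathcal{C}}(\alpha,1)$ with $1\le\alpha\le3$, or $\mathring{R}\in\mathring{\mathcal{C}}(\alpha,9\alpha^{-1}-2)$ with $3\le\alpha<9$, then $R$ has positive isotropic curvature.
   Context: $S^2_0(V)$ is the space of traceless symmetric two-tensors (dimension $N=9$). An algebraic curvature tensor is $R\in S^2(\wedge^2V)$ satisfying the first Bianchi identity. $\mathring{R}=\pi\circ\overline{R}:S^2_0(V)\to S^2_0(V)$ with $\overline{R}(h)_{ij}=\sum_{k,l}R_{iklj}h_{kl}$ and $\pi$ the projection onto traceless tensors. For a symmetric operator with eigenvalues $\lambda_1\le\cdots\le\lambda_N$ and average $\bar\lambda$, write $\lambda_1+\cdots+\lambda_\alpha:=\lambda_1+\cdots+\lambda_{[\alpha]}+(\alpha-[\alpha])\lambda_{[\alpha]+1}$; $\mathcal{C}(\alpha,\theta)$ ($\theta>-1$) is the cone of symmetric operators on $S^2_0(V)$ with $\alpha^{-1}(\lambda_1+\cdots+\lambda_\alpha)\ge-\theta\bar\lambda$, and $\mathring{\mathcal{C}}(\alpha,\theta)$ its interior. $R$ has nonnegative (resp. positive) isotropic curvature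 if $R_{1313}+R_{1414}+R_{2323}+R_{2424}-2R_{1234}\ge0$ (resp. $>0$) for every orthonormal four-frame $\{e_1,e_2,e_3,e_4\}$, where $R_{ijkl}=R(e_i,e_j,e_k,e_l)$. *)

theory Defs
  imports "HOL-Analysis.Analysis" "HOL-Library.Numeral_Type"
begin

text \<open>V = R^4 with its standard inner product; tensors are given by their
components in the standard orthonormal basis (indices of type 4).\<close>

type_synonym tensor4 = "4 \<Rightarrow> 4 \<Rightarrow> 4 \<Rightarrow> 4 \<Rightarrow> real"
type_synonym mat4 = "real ^ 4 ^ 4"

definition alg_curv :: "tensor4 \<Rightarrow> bool" where
  "alg_curv R \<longleftrightarrow> (\<forall>i j k l.
      R i j k l = - R j i k l \<and> R i j k l = - R i j l k \<and> R i j k l = R k l i j \<and>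
      R i j k l + R j k i l + R k i j l = 0)"

definition curv_eval :: "tensor4 \<Rightarrow> real^4 \<Rightarrow> real^4 \<Rightarrow> real^4 \<Rightarrow> real^4 \<Rightarrow> real" where
  "curv_eval R x y z w = (\<Sum>i\<in>UNIV. \<Sum>j\<in>UNIV. \<Sum>k\<in>UNIV. \<Sum>l\<in>UNIV.
      R i j k l * x$i * y$j * z$k * w$l)"

definition orthonormal4 :: "real^4 \<Rightarrow> real^4 \<Rightarrow> real^4 \<Rightarrow> real^4 \<Rightarrow> bool" where
  "orthonormal4 e1 e2 e3 e4 \<longleftrightarrow>
     (let e = [e1, e2, e3, e4] in
      \<forall>a<4. \<forall>b<4. (e!a) \<bullet> (e!b) = (if a = b then 1 else 0))"

definition isotropic_expr :: "tensor4 \<Rightarrow> real^4 \<Rightarrow> real^4 \<Rightarrow> real^4 \<Rightarrow> real^4 \<Rightarrow> real" where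
  "isotropic_expr R e1 e2 e3 e4 =
     curv_eval R e1 e3 e1 e3 + curv_eval R e1 e4 e1 e4 + curv_eval R e2 e3 e2 e3
     + curv_eval R e2 e4 e2 e4 - 2 * curv_eval R e1 e2 e3 e4"

definition nonneg_IC :: "tensor4 \<Rightarrow> bool" where
  "nonneg_IC R \<longleftrightarrow> (\<forall>e1 e2 e3 e4. orthonormal4 e1 e2 e3 e4 \<longrightarrow> isotropic_expr R e1 e2 e3 e4 \<ge> 0)"

definition pos_IC :: "tensor4 \<Rightarrow> bool" where
  "pos_IC R \<longleftrightarrow> (\<forall>e1 e2 e3 e4. orthonormal4 e1 e2 e3 e4 \<longrightarrow> isotropic_expr R e1 e2 e3 e4 > 0)"

text \<open>S^2_0(V): traceless symmetric two-tensors, with inner product tr(hk).\<close>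

definition S20 :: "mat4 \<Rightarrow> bool" where
  "S20 h \<longleftrightarrow> (\<forall>i j. h$i$j = h$j$i) \<and> (\<Sum>i\<in>UNIV. h$i$i) = 0"

definition mat_inner :: "mat4 \<Rightarrow> mat4 \<Rightarrow> real" where
  "mat_inner h k = (\<Sum>i\<in>UNIV. \<Sum>j\<in>UNIV. h$i$j * k$i$j)"

definition Rbar :: "tensor4 \<Rightarrow> mat4 \<Rightarrow> mat4" where
  "Rbar R h = (\<chi> i j. \<Sum>k\<in>UNIV. \<Sum>l\<in>UNIV. R i k l j * h$k$l)"

definition proj_traceless :: "mat4 \<Rightarrow> mat4" where
  "proj_traceless h = (\<chi> i j. h$i$j - (if i = j then (\<Sum>m\<in>UNIV. h$m$m) / 4 else 0))"

definition Rring :: "tensor4 \<Rightarrow> mat4 \<Rightarrow> mat4" where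
  "Rring R h = proj_traceless (Rbar R h)"

text \<open>Symmetric operators on S^2_0(V) (N = 9) and their eigenvalues
lambda_1 \<le> ... \<le> lambda_9 (indexed 1..9), counted with multiplicity via an
orthonormal eigenbasis.\<close>

definition sym_op_S20 :: "(mat4 \<Rightarrow> mat4) \<Rightarrow> bool" where
  "sym_op_S20 A \<longleftrightarrow> (\<forall>h k. S20 h \<longrightarrow> S20 k \<longrightarrow> S20 (A h) \<and>
       (\<forall>a b. A (a *\<^sub>R h + b *\<^sub>R k) = a *\<^sub>R A h + b *\<^sub>R A k) \<and>
       mat_inner (A h) k = mat_inner h (A k))"

definition sorted_eigenvalues :: "(mat4 \<Rightarrow> mat4) \<Rightarrow> (nat \<Rightarrow> real) \<Rightarrow> bool" where
  "sorted_eigenvalues A lam \<longleftrightarrow>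
     (\<forall>a b. 1 \<le> a \<longrightarrow> a \<le> b \<longrightarrow> b \<le> 9 \<longrightarrow> lam a \<le> lam b) \<and>
     (\<exists>H :: nat \<Rightarrow> mat4.
        (\<forall>a\<in>{1..9}. S20 (H a) \<and> A (H a) = lam a *\<^sub>R H a) \<and>
        (\<forall>a\<in>{1..9}. \<forall>b\<in>{1..9}. mat_inner (H a) (H b) = (if a = b then 1 else 0)))"

definition partial_eig_sum :: "(nat \<Rightarrow> real) \<Rightarrow> real \<Rightarrow> real" where
  "partial_eig_sum lam \<alpha> = (\<Sum>i = 1..nat \<lfloor>\<alpha>\<rfloor>. lam i) + (\<alpha> - of_int \<lfloor>\<alpha>\<rfloor>) * lam (nat \<lfloor>\<alpha>\<rfloor> + 1)"

definition avg_eig :: "(nat \<Rightarrow> real) \<Rightarrow> real" where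
  "avg_eig lam = (\<Sum>i = 1..9. lam i) / 9"

definition in_cone :: "(mat4 \<Rightarrow> mat4) \<Rightarrow> real \<Rightarrow> real \<Rightarrow> bool" where
  "in_cone A \<alpha> \<theta> \<longleftrightarrow> sym_op_S20 A \<and>
     (\<forall>lam. sorted_eigenvalues A lam \<longrightarrow> partial_eig_sum lam \<alpha> / \<alpha> \<ge> - \<theta> * avg_eig lam)"

text \<open>Interior of the cone (for theta > -1 this is the strict inequality).\<close>
definition in_cone_interior :: "(mat4 \<Rightarrow> mat4) \<Rightarrow> real \<Rightarrow> real \<Rightarrow> bool" where
  "in_cone_interior A \<alpha> \<theta> \<longleftrightarrow> sym_op_S20 A \<and>
     (\<forall>lam. sorted_eigenvalues A lam \<longrightarrow> partial_eig_sum lam \<alpha> / \<alpha> > - \<theta> * avg_eig lam)"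

end

theory Submission
  imports Defs
begin


lemma curv_swap12:
  assumes "alg_curv R"
  shows "curv_eval R y x z w = - curv_eval R x y z w"
proof -
  have "curv_eval R y x z w = (\<Sum>j\<in>UNIV. \<Sum>i\<in>UNIV. \<Sum>k\<in>UNIV. \<Sum>l\<in>UNIV. R j i k l * y$j * x$i * z$k * w$l)"
    unfolding curv_eval_def by simp
  also have "\<dots> = (\<Sum>i\<in>UNIV. \<Sum>j\<in>UNIV. \<Sum>k\<in>UNIV. \<Sum>l\<in>UNIV. R j i k l * y$j * x$i * z$k * w$l)"
    by (rule sum.swap)
  also have "\<dots> = (\<Sum>i\<in>UNIV. \<Sum>j\<in>UNIV. \<Sum>k\<in>UNIV. \<Sum>l\<in>UNIV. - (R i j k l * x$i * y$j * z$k * w$l))"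
    using assms unfolding alg_curv_def by (intro sum.cong refl) (metis (no_types, lifting) minus_mult_left mult.commute mult.left_commute)
  finally show ?thesis unfolding curv_eval_def by (simp add: sum_negf)
qed

lemma curv_swap34:
  assumes "alg_curv R"
  shows "curv_eval R x y w z = - curv_eval R x y z w"
proof -
  have "curv_eval R x y w z = (\<Sum>i\<in>UNIV. \<Sum>j\<in>UNIV. \<Sum>l\<in>UNIV. \<Sum>k\<in>UNIV. R i j l k * x$i * y$j * w$l * z$k)"
    unfolding curv_eval_def by simp
  also have "\<dots> = (\<Sum>i\<in>UNIV. \<Sum>j\<in>UNIV. \<Sum>k\<in>UNIV. \<Sum>l\<in>UNIV. R i j l k * x$i * y$j * w$l * z$k)"
    by (intro sum.cong refl sum.swap)
  also have "\<dots> = (\<Sum>i\<in>UNIV. \<Sum>j\<in>UNIV. \<Sum>k\<in>UNIV. \<Sum>l\<in>UNIV. - (R i j k l * x$i * y$j * z$k * w$l))"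
    using assms unfolding alg_curv_def by (intro sum.cong refl) (metis (no_types, lifting) minus_mult_left mult.commute mult.left_commute)
  finally show ?thesis unfolding curv_eval_def by (simp add: sum_negf)
qed

lemma curv_pair:
  assumes "alg_curv R"
  shows "curv_eval R z w x y = curv_eval R x y z w"
proof -
  have "curv_eval R z w x y = (\<Sum>k\<in>UNIV. \<Sum>l\<in>UNIV. \<Sum>i\<in>UNIV. \<Sum>j\<in>UNIV. R k l i j * z$k * w$l * x$i * y$j)"
    unfolding curv_eval_def by simp
  also have "\<dots> = (\<Sum>k\<in>UNIV. \<Sum>i\<in>UNIV. \<Sum>l\<in>UNIV. \<Sum>j\<in>UNIV. R k l i j * z$k * w$l * x$i * y$j)"
    by (intro sum.cong refl sum.swap)
  also have "\<dots> = (\<Sum>i\<in>UNIV. \<Sum>k\<in>UNIV. \<Sum>l\<in>UNIV. \<Sum>j\<in>UNIV. R k l i j * z$k * w$l * x$i * y$j)"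
    by (rule sum.swap)
  also have "\<dots> = (\<Sum>i\<in>UNIV. \<Sum>k\<in>UNIV. \<Sum>j\<in>UNIV. \<Sum>l\<in>UNIV. R k l i j * z$k * w$l * x$i * y$j)"
    by (intro sum.cong refl sum.swap)
  also have "\<dots> = (\<Sum>i\<in>UNIV. \<Sum>j\<in>UNIV. \<Sum>k\<in>UNIV. \<Sum>l\<in>UNIV. R k l i j * z$k * w$l * x$i * y$j)"
    by (intro sum.cong refl sum.swap)
  also have "\<dots> = (\<Sum>i\<in>UNIV. \<Sum>j\<in>UNIV. \<Sum>k\<in>UNIV. \<Sum>l\<in>UNIV. R i j k l * x$i * y$j * z$k * w$l)"
    using assms unfolding alg_curv_def by (intro sum.cong refl) (metis (no_types, lifting) mult.commute mult.left_commute)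
  finally show ?thesis unfolding curv_eval_def .
qed

lemma sum4_add3:
  fixes f g h :: "'a::finite \<Rightarrow> 'b::finite \<Rightarrow> 'c::finite \<Rightarrow> 'd::finite \<Rightarrow> real"
  shows "(\<Sum>i\<in>UNIV. \<Sum>j\<in>UNIV. \<Sum>k\<in>UNIV. \<Sum>l\<in>UNIV. f i j k l + g i j k l + h i j k l) =
    (\<Sum>i\<in>UNIV. \<Sum>j\<in>UNIV. \<Sum>k\<in>UNIV. \<Sum>l\<in>UNIV. f i j k l) + (\<Sum>i\<in>UNIV. \<Sum>j\<in>UNIV. \<Sum>k\<in>UNIV. \<Sum>l\<in>UNIV. g i j k l)
    + (\<Sum>i\<in>UNIV. \<Sum>j\<in>UNIV. \<Sum>k\<in>UNIV. \<Sum>l\<in>UNIV. h i j k l)"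
  by (simp add: sum.distrib)

lemma curv_bianchi:
  assumes "alg_curv R"
  shows "curv_eval R x y z w + curv_eval R y z x w + curv_eval R z x y w = 0"
proof -
  have e2: "curv_eval R y z x w = (\<Sum>i\<in>UNIV. \<Sum>j\<in>UNIV. \<Sum>k\<in>UNIV. \<Sum>l\<in>UNIV. R j k i l * x$i * y$j * z$k * w$l)"
  proof -
    have "curv_eval R y z x w = (\<Sum>j\<in>UNIV. \<Sum>k\<in>UNIV. \<Sum>i\<in>UNIV. \<Sum>l\<in>UNIV. R j k i l * y$j * z$k * x$i * w$l)"
      unfolding curv_eval_def by simp
    also have "\<dots> = (\<Sum>j\<in>UNIV. \<Sum>i\<in>UNIV. \<Sum>k\<in>UNIV. \<Sum>l\<in>UNIV. R j k i l * y$j * z$k * x$i * w$l)"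
      by (intro sum.cong refl sum.swap)
    also have "\<dots> = (\<Sum>i\<in>UNIV. \<Sum>j\<in>UNIV. \<Sum>k\<in>UNIV. \<Sum>l\<in>UNIV. R j k i l * y$j * z$k * x$i * w$l)"
      by (rule sum.swap)
    finally show ?thesis by (simp add: ac_simps)
  qed
  have e3: "curv_eval R z x y w = (\<Sum>i\<in>UNIV. \<Sum>j\<in>UNIV. \<Sum>k\<in>UNIV. \<Sum>l\<in>UNIV. R k i j l * x$i * y$j * z$k * w$l)"
  proof -
    have "curv_eval R z x y w = (\<Sum>k\<in>UNIV. \<Sum>i\<in>UNIV. \<Sum>j\<in>UNIV. \<Sum>l\<in>UNIV. R k i j l * z$k * x$i * y$j * w$l)"
      unfolding curv_eval_def by simp
    also have "\<dots> = (\<Sum>i\<in>UNIV. \<Sum>k\<in>UNIV. \<Sum>j\<in>UNIV. \<Sum>l\<in>UNIV. R k i j l * z$k * x$i * y$j * w$l)"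
      by (rule sum.swap)
    also have "\<dots> = (\<Sum>i\<in>UNIV. \<Sum>j\<in>UNIV. \<Sum>k\<in>UNIV. \<Sum>l\<in>UNIV. R k i j l * z$k * x$i * y$j * w$l)"
      by (intro sum.cong refl sum.swap)
    finally show ?thesis by (simp add: ac_simps)
  qed
  have "(\<Sum>i\<in>UNIV. \<Sum>j\<in>UNIV. \<Sum>k\<in>UNIV. \<Sum>l\<in>UNIV. (R i j k l + R j k i l + R k i j l) * x$i * y$j * z$k * w$l)
     = curv_eval R x y z w + curv_eval R y z x w + curv_eval R z x y w"
    unfolding e2 e3 unfolding curv_eval_def distrib_right by (rule sum4_add3)
  moreover have "(\<Sum>i\<in>UNIV. \<Sum>j\<in>UNIV. \<Sum>k\<in>UNIV. \<Sum>l\<in>UNIV. (R i j k l + R j k i l + R k i j l) * x$i * y$j * z$k * w$l) = 0"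
  proof -
    have b: "\<And>i j k l. R i j k l + R j k i l + R k i j l = 0" using assms unfolding alg_curv_def by blast
    show ?thesis by (simp add: b)
  qed
  ultimately show ?thesis by simp
qed


lemma quad_nonneg_zero:
  fixes c d :: real
  assumes "\<And>t. 0 \<le> 2*t*c + t^2*d"
  shows "c = 0"
proof (cases "d \<le> 0")
  case True
  have "0 \<le> 2*(-c)*c + (-c)^2*d" by (rule assms)
  moreover have "(-c)^2*d \<le> 0" using True by (simp add: mult_nonneg_nonpos)
  ultimately have "c*c \<le> 0" by (simp add: power2_eq_square)
  then show ?thesis by (metis mult_eq_0_iff not_square_less_zero order_le_less)
next
  case False
  have "0 \<le> 2*(-c/d)*c + (-c/d)^2*d" by (rule assms)
  also have "2*(-c/d)*c + (-c/d)^2*d = - (c*c)/d" using False by (simp add: power2_eq_square field_simps)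
  finally have "c*c \<le> 0" using False by (simp add: divide_le_0_iff)
  then show ?thesis by (metis mult_eq_0_iff not_square_less_zero order_le_less)
qed

lemma spectral_step:
  fixes A :: "'a::euclidean_space \<Rightarrow> 'a"
  assumes V: "subspace V" and lin: "linear A" and inv: "\<And>x. x \<in> V \<Longrightarrow> A x \<in> V"
    and sym: "\<And>x y. x \<in> V \<Longrightarrow> y \<in> V \<Longrightarrow> A x \<bullet> y = x \<bullet> A y"
  shows "k \<le> dim V \<Longrightarrow> \<exists>H lam. (\<forall>i<k. H i \<in> V \<and> A (H i) = lam i *\<^sub>R H i) \<and>
      (\<forall>i<k. \<forall>j<k. H i \<bullet> H j = (if i = j then 1 else 0)) \<and>
      (\<forall>i<k. \<forall>x\<in>V. (\<forall>j<i. x \<bullet> H j = 0) \<longrightarrow> lam i * (x \<bullet> x) \<le> A x \<bullet> x)"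
proof (induction k)
  case 0
  then show ?case by auto
next
  case (Suc k)
  then obtain H lam where HV: "\<forall>i<k. H i \<in> V \<and> A (H i) = lam i *\<^sub>R H i"
    and Hon: "\<forall>i<k. \<forall>j<k. H i \<bullet> H j = (if i = j then 1 else 0)"
    and Hmin: "\<forall>i<k. \<forall>x\<in>V. (\<forall>j<i. x \<bullet> H j = 0) \<longrightarrow> lam i * (x \<bullet> x) \<le> A x \<bullet> x"
    by auto
  define W where "W = {x \<in> V. \<forall>j<k. x \<bullet> H j = 0}"
  have Wsub: "subspace W"
    unfolding W_def subspace_def using V[unfolded subspace_def]
    by (auto simp: inner_add_left)
  have WV: "W \<subseteq> V" unfolding W_def by auto
  have proj: "x - (\<Sum>j<k. (x \<bullet> H j) *\<^sub>R H j) \<in> W" if "x \<in> V" for x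
  proof -
    have "x - (\<Sum>j<k. (x \<bullet> H j) *\<^sub>R H j) \<in> V"
      using that HV by (intro subspace_diff[OF V] subspace_sum[OF V] subspace_scale[OF V]) auto
    moreover have "(x - (\<Sum>j<k. (x \<bullet> H j) *\<^sub>R H j)) \<bullet> H i = 0" if "i < k" for i
    proof -
      have "(\<Sum>j<k. (x \<bullet> H j) *\<^sub>R H j) \<bullet> H i = (\<Sum>j<k. (x \<bullet> H j) * (H j \<bullet> H i))"
        by (simp add: inner_sum_left)
      also have "\<dots> = (\<Sum>j<k. if j = i then x \<bullet> H i else 0)"
        using Hon that by (intro sum.cong) auto
      also have "\<dots> = x \<bullet> H i" using that by simp
      finally show ?thesis by (simp add: inner_diff_left)
    qed
    ultimately show ?thesis unfolding W_def by auto
  qed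
  have "\<exists>u\<in>W. norm u = 1"
  proof (rule ccontr)
    assume nu: "\<not> (\<exists>u\<in>W. norm u = 1)"
    have W0: "x = 0" if "x \<in> W" for x
    proof (rule ccontr)
      assume "x \<noteq> 0"
      then have "(1 / norm x) *\<^sub>R x \<in> W" "norm ((1 / norm x) *\<^sub>R x) = 1"
        using that subspace_scale[OF Wsub] by auto
      then show False using nu by blast
    qed
    have "V \<subseteq> span (H ` {..<k})"
    proof
      fix x assume "x \<in> V"
      then have "x - (\<Sum>j<k. (x \<bullet> H j) *\<^sub>R H j) = 0" using proj W0 by blast
      then have "x = (\<Sum>j<k. (x \<bullet> H j) *\<^sub>R H j)" by simp
      also have "\<dots> \<in> span (H ` {..<k})"
        by (intro span_sum span_scale span_base) auto
      finally show "x \<in> span (H ` {..<k})" .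
    qed
    then have "dim V \<le> card (H ` {..<k})" by (rule dim_le_card) auto
    also have "\<dots> \<le> k" using card_image_le[of "{..<k}" H] by simp
    finally show False using Suc.prems by simp
  qed
  then have Sne: "W \<inter> sphere 0 1 \<noteq> {}" by auto
  have Scomp: "compact (W \<inter> sphere 0 1)"
    by (intro closed_Int_compact compact_sphere closed_subspace Wsub)
  have blin: "bounded_linear A" using lin linear_conv_bounded_linear by blast
  have fcont: "continuous_on (W \<inter> sphere 0 1) (\<lambda>x. A x \<bullet> x)"
    by (intro continuous_intros linear_continuous_on blin)
  obtain u where uS: "u \<in> W \<inter> sphere 0 1" and umin: "\<And>y. y \<in> W \<inter> sphere 0 1 \<Longrightarrow> A u \<bullet> u \<le> A y \<bullet> y"
    using continuous_attains_inf[OF Scomp Sne fcont] by blast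
  define \<mu> where "\<mu> = A u \<bullet> u"
  have uW: "u \<in> W" and un: "u \<bullet> u = 1" using uS by (auto simp: dot_square_norm)
  have uV: "u \<in> V" using uW WV by auto
  have Wmin: "\<mu> * (w \<bullet> w) \<le> A w \<bullet> w" if "w \<in> W" for w
  proof (cases "w = 0")
    case True then show ?thesis using linear_0[OF lin] by simp
  next
    case False
    define c where "c = 1 / norm w"
    have "c *\<^sub>R w \<in> W \<inter> sphere 0 1" using False that subspace_scale[OF Wsub] by (auto simp: c_def)
    then have "\<mu> \<le> A (c *\<^sub>R w) \<bullet> (c *\<^sub>R w)" using umin unfolding \<mu>_def by blast
    also have "\<dots> = c^2 * (A w \<bullet> w)" using linear_scale[OF lin] by (simp add: power2_eq_square)
    finally have "\<mu> \<le> c^2 * (A w \<bullet> w)" .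
    then have "\<mu> * (w \<bullet> w) \<le> c^2 * (A w \<bullet> w) * (w \<bullet> w)"
      by (intro mult_right_mono) auto
    also have "c^2 * (A w \<bullet> w) * (w \<bullet> w) = A w \<bullet> w"
    proof -
      have "c^2 * (w \<bullet> w) = 1" using False by (simp add: c_def dot_square_norm power_divide)
      then show ?thesis by (metis mult.commute mult.left_commute mult.right_neutral)
    qed
    finally show ?thesis .
  qed
  have eig0: "A u \<bullet> v = \<mu> * (u \<bullet> v)" if "v \<in> W" for v
  proof -
    have vV: "v \<in> V" using that WV by auto
    have avu: "A v \<bullet> u = A u \<bullet> v" using sym[OF vV uV] by (simp add: inner_commute)
    have "0 \<le> 2*t*(A u \<bullet> v - \<mu> * (u \<bullet> v)) + t^2 * (A v \<bullet> v - \<mu> * (v \<bullet> v))" for t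
    proof -
      have "u + t *\<^sub>R v \<in> W" using uW that subspace_add[OF Wsub] subspace_scale[OF Wsub] by blast
      then have "\<mu> * ((u + t *\<^sub>R v) \<bullet> (u + t *\<^sub>R v)) \<le> A (u + t *\<^sub>R v) \<bullet> (u + t *\<^sub>R v)" by (rule Wmin)
      moreover have "A (u + t *\<^sub>R v) = A u + t *\<^sub>R A v" using lin by (simp add: linear_add linear_scale)
      ultimately have "\<mu> * ((u + t *\<^sub>R v) \<bullet> (u + t *\<^sub>R v)) \<le> (A u + t *\<^sub>R A v) \<bullet> (u + t *\<^sub>R v)" by simp
      then have "\<mu> * (u \<bullet> u + 2 * t * (u \<bullet> v) + t^2 * (v \<bullet> v)) \<le> A u \<bullet> u + t * (A u \<bullet> v) + t * (A v \<bullet> u) + t^2 * (A v \<bullet> v)"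
        by (simp add: inner_add_left inner_add_right inner_commute power2_eq_square algebra_simps)
      then show ?thesis using avu un unfolding \<mu>_def by (simp add: algebra_simps)
    qed
    then show ?thesis using quad_nonneg_zero by fastforce
  qed
  define z where "z = A u - \<mu> *\<^sub>R u"
  have zW: "z \<in> W"
  proof -
    have "z \<in> V" unfolding z_def using inv[OF uV] uV by (intro subspace_diff[OF V] subspace_scale[OF V])
    moreover have "z \<bullet> H j = 0" if "j < k" for j
    proof -
      have HjV: "H j \<in> V" and eH: "A (H j) = lam j *\<^sub>R H j" using HV that by auto
      have "A u \<bullet> H j = u \<bullet> A (H j)" using sym[OF uV HjV] .
      also have "\<dots> = lam j * (u \<bullet> H j)" using eH by simp
      also have "u \<bullet> H j = 0" using uW that unfolding W_def by auto
      finally have "A u \<bullet> H j = 0" by simp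
      then show ?thesis unfolding z_def using uW that unfolding W_def by (simp add: inner_diff_left)
    qed
    ultimately show ?thesis unfolding W_def by auto
  qed
  have "z \<bullet> z = 0"
  proof -
    have "z \<bullet> z = A u \<bullet> z - \<mu> * (u \<bullet> z)" unfolding z_def by (simp add: inner_diff_left)
    then show ?thesis using eig0[OF zW] by simp
  qed
  then have Au: "A u = \<mu> *\<^sub>R u" unfolding z_def by simp
  define H' where "H' = H(k := u)"
  define lam' where "lam' = lam(k := \<mu>)"
  have uH: "u \<bullet> H j = 0" if "j < k" for j using uW that unfolding W_def by auto
  show ?case
  proof (intro exI[of _ H'] exI[of _ lam'] conjI allI impI ballI)
    fix i assume "i < Suc k"
    then show "H' i \<in> V" "A (H' i) = lam' i *\<^sub>R H' i"
      using HV uV Au unfolding H'_def lam'_def by (auto simp: less_Suc_eq)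
  next
    fix i j assume "i < Suc k" "j < Suc k"
    then show "H' i \<bullet> H' j = (if i = j then 1 else 0)"
      using Hon uH un unfolding H'_def by (auto simp: less_Suc_eq inner_commute)
  next
    fix i x assume i: "i < Suc k" and xV: "x \<in> V" and xo: "\<forall>j<i. x \<bullet> H' j = 0"
    show "lam' i * (x \<bullet> x) \<le> A x \<bullet> x"
    proof (cases "i = k")
      case True
      have "x \<in> W" using xV xo True unfolding W_def H'_def by auto
      then show ?thesis using Wmin True unfolding lam'_def by simp
    next
      case False
      then have "i < k" using i by simp
      moreover have "\<forall>j<i. x \<bullet> H j = 0" using xo \<open>i < k\<close> unfolding H'_def by auto
      ultimately show ?thesis using Hmin xV unfolding lam'_def by auto
    qed
  qed
qed


lemma complete_expand:
  fixes G :: "nat \<Rightarrow> 'a::euclidean_space"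
  assumes V: "subspace V" and dimV: "dim V \<le> card I" and fin: "finite I"
    and GV: "\<forall>i\<in>I. G i \<in> V" and on: "\<forall>i\<in>I. \<forall>j\<in>I. G i \<bullet> G j = (if i = j then 1 else 0)"
    and xV: "x \<in> V"
  shows "x = (\<Sum>i\<in>I. (x \<bullet> G i) *\<^sub>R G i)"
proof -
  have inj: "inj_on G I"
  proof (rule inj_onI)
    fix i j assume "i \<in> I" "j \<in> I" "G i = G j"
    then have "G i \<bullet> G j = 1" using on by auto
    then show "i = j" using on \<open>i \<in> I\<close> \<open>j \<in> I\<close> by (auto split: if_splits)
  qed
  have "pairwise orthogonal (G ` I)"
    unfolding pairwise_def orthogonal_def using on by auto
  moreover have "0 \<notin> G ` I" using on by fastforce
  ultimately have ind: "independent (G ` I)" by (rule pairwise_orthogonal_independent)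
  have "V \<subseteq> span (G ` I)"
    by (rule card_ge_dim_independent) (use GV ind dimV card_image[OF inj] in auto)
  then have xs: "x \<in> span (G ` I)" using xV by auto
  define y where "y = x - (\<Sum>i\<in>I. (x \<bullet> G i) *\<^sub>R G i)"
  have ys: "y \<in> span (G ` I)" unfolding y_def
    by (intro span_diff xs span_sum span_scale span_base) auto
  have "orthogonal y b" if "b \<in> G ` I" for b
  proof -
    obtain j where j: "j \<in> I" "b = G j" using \<open>b \<in> G ` I\<close> by auto
    have "(\<Sum>i\<in>I. (x \<bullet> G i) *\<^sub>R G i) \<bullet> G j = (\<Sum>i\<in>I. (x \<bullet> G i) * (G i \<bullet> G j))"
      by (simp add: inner_sum_left)
    also have "\<dots> = (\<Sum>i\<in>I. if i = j then x \<bullet> G j else 0)"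
      using on j by (intro sum.cong) auto
    also have "\<dots> = x \<bullet> G j" using j fin by simp
    finally show ?thesis unfolding orthogonal_def y_def j by (simp add: inner_diff_left)
  qed
  then have "orthogonal y y" by (rule orthogonal_to_span[OF ys])
  then have "y = 0" by (simp add: orthogonal_def)
  then show ?thesis unfolding y_def by simp
qed

lemma complete_parseval:
  fixes G :: "nat \<Rightarrow> 'a::euclidean_space"
  assumes V: "subspace V" and dimV: "dim V \<le> card I" and fin: "finite I"
    and GV: "\<forall>i\<in>I. G i \<in> V" and on: "\<forall>i\<in>I. \<forall>j\<in>I. G i \<bullet> G j = (if i = j then 1 else 0)"
    and xV: "x \<in> V"
  shows "x \<bullet> z = (\<Sum>i\<in>I. (x \<bullet> G i) * (z \<bullet> G i))"
proof -
  have "x \<bullet> z = (\<Sum>i\<in>I. (x \<bullet> G i) *\<^sub>R G i) \<bullet> z"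
    using complete_expand[OF assms] by simp
  also have "\<dots> = (\<Sum>i\<in>I. (x \<bullet> G i) * (G i \<bullet> z))"
    by (simp add: inner_sum_left)
  also have "\<dots> = (\<Sum>i\<in>I. (x \<bullet> G i) * (z \<bullet> G i))"
    by (simp add: inner_commute)
  finally show ?thesis .
qed

lemma complete_rayleigh:
  fixes H :: "nat \<Rightarrow> 'a::euclidean_space"
  assumes V: "subspace V" and dimV: "dim V \<le> card I" and fin: "finite I"
    and HV: "\<forall>i\<in>I. H i \<in> V" and on: "\<forall>i\<in>I. \<forall>j\<in>I. H i \<bullet> H j = (if i = j then 1 else 0)"
    and lin: "linear A" and eig: "\<forall>i\<in>I. A (H i) = lam i *\<^sub>R H i"
    and xV: "x \<in> V"
  shows "A x \<bullet> x = (\<Sum>i\<in>I. lam i * (x \<bullet> H i)^2)"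
proof -
  have "A x = A (\<Sum>i\<in>I. (x \<bullet> H i) *\<^sub>R H i)"
    using complete_expand[OF V dimV fin HV on xV] by simp
  also have "\<dots> = (\<Sum>i\<in>I. (x \<bullet> H i) *\<^sub>R A (H i))"
    by (simp add: linear_sum[OF lin] linear_scale[OF lin] o_def)
  also have "\<dots> = (\<Sum>i\<in>I. (x \<bullet> H i * lam i) *\<^sub>R H i)"
    using eig by (intro sum.cong) auto
  finally have "A x \<bullet> x = (\<Sum>i\<in>I. (x \<bullet> H i * lam i) * (H i \<bullet> x))"
    by (simp add: inner_sum_left)
  also have "\<dots> = (\<Sum>i\<in>I. lam i * (x \<bullet> H i)^2)"
    by (intro sum.cong) (auto simp: power2_eq_square inner_commute)
  finally show ?thesis .
qed

lemma complete_trace: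
  fixes H G :: "nat \<Rightarrow> 'a::euclidean_space"
  assumes V: "subspace V" and dimV: "dim V \<le> card I" and fin: "finite I"
    and HV: "\<forall>i\<in>I. H i \<in> V" and on: "\<forall>i\<in>I. \<forall>j\<in>I. H i \<bullet> H j = (if i = j then 1 else 0)"
    and GV: "\<forall>i\<in>I. G i \<in> V" and onG: "\<forall>i\<in>I. \<forall>j\<in>I. G i \<bullet> G j = (if i = j then 1 else 0)"
    and lin: "linear A" and eig: "\<forall>i\<in>I. A (H i) = lam i *\<^sub>R H i"
  shows "(\<Sum>b\<in>I. A (G b) \<bullet> G b) = (\<Sum>a\<in>I. lam a)"
proof -
  have "(\<Sum>b\<in>I. A (G b) \<bullet> G b) = (\<Sum>b\<in>I. \<Sum>a\<in>I. lam a * (G b \<bullet> H a)^2)"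
    using complete_rayleigh[OF V dimV fin HV on lin eig] GV by (intro sum.cong) auto
  also have "\<dots> = (\<Sum>a\<in>I. lam a * (\<Sum>b\<in>I. (H a \<bullet> G b) * (H a \<bullet> G b)))"
    by (subst sum.swap) (simp add: sum_distrib_left power2_eq_square inner_commute)
  also have "\<dots> = (\<Sum>a\<in>I. lam a)"
  proof (intro sum.cong refl)
    fix a assume a: "a \<in> I"
    have "H a \<bullet> H a = (\<Sum>b\<in>I. (H a \<bullet> G b) * (H a \<bullet> G b))"
      using complete_parseval[OF V dimV fin GV onG] HV a by auto
    then show "lam a * (\<Sum>b\<in>I. (H a \<bullet> G b) * (H a \<bullet> G b)) = lam a" using on a by simp
  qed
  finally show ?thesis .
qed

lemma weighted_ge3:
  fixes lam m :: "nat \<Rightarrow> real"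
  assumes sorted: "\<And>a b. 1 \<le> a \<Longrightarrow> a \<le> b \<Longrightarrow> b \<le> 9 \<Longrightarrow> lam a \<le> lam b"
    and m0: "\<And>a. 0 \<le> m a" and m1: "\<And>a. m a \<le> 1" and ms: "(\<Sum>a=1..9. m a) = 3"
  shows "(\<Sum>a=1..9. lam a * m a) \<ge> lam 1 + lam 2 + lam 3"
proof -
  have "(\<Sum>a=1..9. (lam a - lam 3) * (if a \<le> 3 then 1 else 0)) \<le> (\<Sum>a=1..9. (lam a - lam 3) * m a)"
  proof (intro sum_mono)
    fix a assume a: "a \<in> {1..(9::nat)}"
    show "(lam a - lam 3) * (if a \<le> 3 then 1 else 0) \<le> (lam a - lam 3) * m a"
    proof (cases "a \<le> 3")
      case True
      then have "lam a - lam 3 \<le> 0" using sorted a by auto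
      then have "(lam a - lam 3) * 1 \<le> (lam a - lam 3) * m a" using m1 by (intro mult_left_mono_neg) auto
      then show ?thesis using True by simp
    next
      case False
      then have "lam a - lam 3 \<ge> 0" using sorted a by auto
      then show ?thesis using False m0 by simp
    qed
  qed
  moreover have "(\<Sum>a=1..9. (lam a - lam 3) * (if a \<le> 3 then 1 else 0)) = lam 1 + lam 2 + lam 3 - 3 * lam 3"
    by (simp add: numeral_eq_Suc)
  moreover have "(\<Sum>a=1..9. (lam a - lam 3) * m a) = (\<Sum>a=1..9. lam a * m a) - lam 3 * 3"
  proof -
    have "(\<Sum>a=1..9. (lam a - lam 3) * m a) = (\<Sum>a=1..9. lam a * m a) - lam 3 * (\<Sum>a=1..9. m a)"
      by (simp add: algebra_simps sum_subtractf sum_distrib_left)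
    then show ?thesis using ms by simp
  qed
  ultimately show ?thesis by simp
qed


lemma mat_inner_eq: "mat_inner h k = h \<bullet> k"
  unfolding mat_inner_def by (simp add: inner_vec_def)

lemma S20_subspace: "subspace {h. S20 h}"
  unfolding subspace_def S20_def by (auto simp: sum.distrib sum_distrib_left[symmetric])

lemma Rbar_add: "Rbar R (h + k) = Rbar R h + Rbar R k"
  unfolding Rbar_def by (simp add: vec_eq_iff distrib_left sum.distrib)

lemma Rbar_scale: "Rbar R (c *\<^sub>R h) = c *\<^sub>R Rbar R h"
  unfolding Rbar_def by (simp add: vec_eq_iff sum_distrib_left algebra_simps)

lemma linear_Rbar: "linear (Rbar R)"
  by (intro linearI Rbar_add Rbar_scale)

lemma linear_proj: "linear proj_traceless"
  by (intro linearI) (auto simp: proj_traceless_def vec_eq_iff sum.distrib sum_distrib_left[symmetric] algebra_simps add_divide_distrib)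

lemma linear_Rring: "linear (Rring R)"
proof -
  have "Rring R = proj_traceless \<circ> Rbar R" unfolding Rring_def by auto
  then show ?thesis using linear_compose[OF linear_Rbar linear_proj] by simp
qed

lemma proj_inner: assumes "S20 k" shows "proj_traceless M \<bullet> k = M \<bullet> k"
proof -
  have tr: "(\<Sum>i\<in>UNIV. k$i$i) = 0" using assms unfolding S20_def by auto
  have p: "proj_traceless M = M - ((\<Sum>m\<in>UNIV. M$m$m) / 4) *\<^sub>R (\<chi> i j. if i = j then 1 else 0)"
    by (simp add: proj_traceless_def vec_eq_iff)
  have "(\<chi> i j. if i = j then 1 else 0) \<bullet> k = (\<Sum>i\<in>UNIV. k$i$i)"
  proof -
    have "(\<chi> i j. if i = j then 1 else 0) \<bullet> k = (\<Sum>i\<in>UNIV. \<Sum>j\<in>UNIV. (if i = j then 1 else 0) * k$i$j)"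
      by (simp add: inner_vec_def)
    also have "\<dots> = (\<Sum>i\<in>UNIV. \<Sum>j\<in>UNIV. if i = j then k$i$j else 0)"
      by (intro sum.cong refl) simp
    finally show ?thesis by simp
  qed
  then show ?thesis unfolding p using tr by (simp add: inner_diff_left)
qed

lemma Rring_inner: "S20 k \<Longrightarrow> Rring R h \<bullet> k = Rbar R h \<bullet> k"
  unfolding Rring_def by (rule proj_inner)

definition outer :: "real^4 \<Rightarrow> real^4 \<Rightarrow> mat4" where
  "outer u v = (\<chi> i j. u$i * v$j)"

lemma outer_inner: "outer a b \<bullet> outer c d = (a \<bullet> c) * (b \<bullet> d)"
  unfolding outer_def by (simp add: inner_vec_def sum_product algebra_simps)

lemma Rbar_outer: "Rbar R (outer z w) \<bullet> outer x y = curv_eval R x z w y"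
proof -
  have "Rbar R (outer z w) \<bullet> outer x y = (\<Sum>i\<in>UNIV. \<Sum>j\<in>UNIV. \<Sum>k\<in>UNIV. \<Sum>l\<in>UNIV. R i k l j * x$i * z$k * w$l * y$j)"
    unfolding Rbar_def outer_def by (simp add: inner_vec_def sum_distrib_right sum_distrib_left algebra_simps)
  also have "\<dots> = (\<Sum>i\<in>UNIV. \<Sum>k\<in>UNIV. \<Sum>j\<in>UNIV. \<Sum>l\<in>UNIV. R i k l j * x$i * z$k * w$l * y$j)"
    by (intro sum.cong refl sum.swap)
  also have "\<dots> = (\<Sum>i\<in>UNIV. \<Sum>k\<in>UNIV. \<Sum>l\<in>UNIV. \<Sum>j\<in>UNIV. R i k l j * x$i * z$k * w$l * y$j)"
    by (intro sum.cong refl sum.swap)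
  finally show ?thesis unfolding curv_eval_def .
qed

definition conjm :: "(4 \<Rightarrow> real^4) \<Rightarrow> (4 \<Rightarrow> 4 \<Rightarrow> real) \<Rightarrow> mat4" where
  "conjm e X = (\<Sum>a\<in>UNIV. \<Sum>b\<in>UNIV. X a b *\<^sub>R outer (e a) (e b))"

lemma conjm_inner:
  assumes on: "\<And>a b. e a \<bullet> e b = (if a = b then 1 else 0)"
  shows "conjm e X \<bullet> conjm e Y = (\<Sum>a\<in>UNIV. \<Sum>b\<in>UNIV. X a b * Y a b)"
proof -
  have "conjm e X \<bullet> conjm e Y = (\<Sum>a\<in>UNIV. \<Sum>b\<in>UNIV. Y a b * (\<Sum>c\<in>UNIV. \<Sum>d\<in>UNIV. X c d * ((e c \<bullet> e a) * (e d \<bullet> e b))))"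
    unfolding conjm_def by (simp add: inner_sum_left inner_sum_right outer_inner)
  also have "\<dots> = (\<Sum>a\<in>UNIV. \<Sum>b\<in>UNIV. Y a b * X a b)"
  proof (intro sum.cong refl)
    fix a b
    have "(\<Sum>c\<in>UNIV. \<Sum>d\<in>UNIV. X c d * ((e c \<bullet> e a) * (e d \<bullet> e b))) = (\<Sum>c\<in>UNIV. \<Sum>d\<in>UNIV. if d = b then (if c = a then X c d else 0) else 0)"
      by (intro sum.cong refl) (simp add: on)
    also have "\<dots> = X a b" by simp
    finally show "Y a b * (\<Sum>c\<in>UNIV. \<Sum>d\<in>UNIV. X c d * ((e c \<bullet> e a) * (e d \<bullet> e b))) = Y a b * X a b" by simp
  qed
  finally show ?thesis by (simp add: mult.commute)
qed

lemma conjm_S20: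
  assumes on: "\<And>a b. e a \<bullet> e b = (if a = b then 1 else 0)"
    and sym: "\<And>a b. X a b = X b a" and tr: "(\<Sum>a\<in>UNIV. X a a) = 0"
  shows "S20 (conjm e X)"
proof -
  have ent: "conjm e X $ i $ j = (\<Sum>a\<in>UNIV. \<Sum>b\<in>UNIV. X a b * (e a $ i * e b $ j))" for i j
    unfolding conjm_def outer_def by (simp add: sum_component)
  have "conjm e X $ i $ j = conjm e X $ j $ i" for i j
  proof -
    have "conjm e X $ i $ j = (\<Sum>b\<in>UNIV. \<Sum>a\<in>UNIV. X a b * (e a $ i * e b $ j))"
      unfolding ent by (rule sum.swap)
    also have "\<dots> = conjm e X $ j $ i" unfolding ent using sym
      by (intro sum.cong refl) (simp add: algebra_simps)
    finally show ?thesis .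
  qed
  moreover have "(\<Sum>i\<in>UNIV. conjm e X $ i $ i) = 0"
  proof -
    have "(\<Sum>i\<in>UNIV. conjm e X $ i $ i) = (\<Sum>a\<in>UNIV. \<Sum>b\<in>UNIV. X a b * (e a \<bullet> e b))"
    proof -
      have "(\<Sum>i\<in>UNIV. conjm e X $ i $ i) = (\<Sum>i\<in>UNIV. \<Sum>a\<in>UNIV. \<Sum>b\<in>UNIV. X a b * (e a $ i * e b $ i))"
        unfolding ent ..
      also have "\<dots> = (\<Sum>a\<in>UNIV. \<Sum>i\<in>UNIV. \<Sum>b\<in>UNIV. X a b * (e a $ i * e b $ i))" by (rule sum.swap)
      also have "\<dots> = (\<Sum>a\<in>UNIV. \<Sum>b\<in>UNIV. \<Sum>i\<in>UNIV. X a b * (e a $ i * e b $ i))" by (intro sum.cong refl sum.swap)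
      also have "\<dots> = (\<Sum>a\<in>UNIV. \<Sum>b\<in>UNIV. X a b * (e a \<bullet> e b))"
        by (simp add: inner_vec_def inner_real_def sum_distrib_left)
      finally show ?thesis .
    qed
    also have "\<dots> = (\<Sum>a\<in>UNIV. X a a)" by (simp add: on if_distrib cong: if_cong)
    finally show ?thesis using tr by simp
  qed
  ultimately show ?thesis unfolding S20_def by auto
qed

lemma conjm_Q:
  "Rbar R (conjm e X) \<bullet> conjm e X = (\<Sum>a\<in>UNIV. \<Sum>b\<in>UNIV. X a b * (\<Sum>c\<in>UNIV. \<Sum>d\<in>UNIV. X c d * curv_eval R (e a) (e c) (e d) (e b)))"
proof -
  have "Rbar R (conjm e X) = (\<Sum>c\<in>UNIV. \<Sum>d\<in>UNIV. X c d *\<^sub>R Rbar R (outer (e c) (e d)))"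
    unfolding conjm_def by (simp add: linear_sum[OF linear_Rbar] linear_scale[OF linear_Rbar] o_def)
  then show ?thesis unfolding conjm_def by (simp add: inner_sum_left inner_sum_right Rbar_outer)
qed


definition psi1 :: "4 \<Rightarrow> 4 \<Rightarrow> real" where
  "psi1 a b = (if (a = 1 \<and> b = 3) \<or> (a = 3 \<and> b = 1) \<or> (a = 2 \<and> b = 4) \<or> (a = 4 \<and> b = 2) then 1/2 else 0)"
definition psi2 :: "4 \<Rightarrow> 4 \<Rightarrow> real" where
  "psi2 a b = (if (a = 1 \<and> b = 4) \<or> (a = 4 \<and> b = 1) then 1/2 else if (a = 2 \<and> b = 3) \<or> (a = 3 \<and> b = 2) then -1/2 else 0)"
definition gz :: "4 \<Rightarrow> 4 \<Rightarrow> real" where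
  "gz a b = (if a = b then (if a = 1 \<or> a = 2 then 1/2 else -1/2) else 0)"
definition phi1 :: "4 \<Rightarrow> 4 \<Rightarrow> real" where
  "phi1 a b = (if (a = 1 \<and> b = 3) \<or> (a = 3 \<and> b = 1) then 1/2 else if (a = 2 \<and> b = 4) \<or> (a = 4 \<and> b = 2) then -1/2 else 0)"
definition phi2 :: "4 \<Rightarrow> 4 \<Rightarrow> real" where
  "phi2 a b = (if (a = 1 \<and> b = 4) \<or> (a = 4 \<and> b = 1) \<or> (a = 2 \<and> b = 3) \<or> (a = 3 \<and> b = 2) then 1/2 else 0)"
definition ysix :: "4 \<Rightarrow> 4 \<Rightarrow> real" where
  "ysix a b = (if (a = 1 \<and> b = 2) \<or> (a = 2 \<and> b = 1) \<or> (a = 3 \<and> b = 4) \<or> (a = 4 \<and> b = 3) then 1/2 else 0)"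
definition yseven :: "4 \<Rightarrow> 4 \<Rightarrow> real" where
  "yseven a b = (if (a = 1 \<and> b = 2) \<or> (a = 2 \<and> b = 1) then 1/2 else if (a = 3 \<and> b = 4) \<or> (a = 4 \<and> b = 3) then -1/2 else 0)"
definition yeight :: "4 \<Rightarrow> 4 \<Rightarrow> real" where
  "yeight a b = (if a = b then (if a = 1 \<or> a = 3 then 1/2 else -1/2) else 0)"
definition ynine :: "4 \<Rightarrow> 4 \<Rightarrow> real" where
  "ynine a b = (if a = b then (if a = 1 \<or> a = 4 then 1/2 else -1/2) else 0)"

definition Xm :: "nat \<Rightarrow> 4 \<Rightarrow> 4 \<Rightarrow> real" where
  "Xm n = [psi1, psi2, gz, phi1, phi2, ysix, yseven, yeight, ynine] ! (n - 1)"

lemmas Xdefs = psi1_def psi2_def gz_def phi1_def phi2_def ysix_def yseven_def yeight_def ynine_def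

lemma Xm_explicit: "Xm 1 = psi1" "Xm 2 = psi2" "Xm 3 = gz" "Xm 4 = phi1" "Xm 5 = phi2"
  "Xm 6 = ysix" "Xm 7 = yseven" "Xm 8 = yeight" "Xm 9 = ynine"
  by (simp_all add: Xm_def)

lemma nat_1_9: "n \<in> {1..9::nat} \<longleftrightarrow> n = 1 \<or> n = 2 \<or> n = 3 \<or> n = 4 \<or> n = 5 \<or> n = 6 \<or> n = 7 \<or> n = 8 \<or> n = 9"
  by auto

lemma ipX:
  "(\<Sum>a\<in>UNIV. \<Sum>b\<in>UNIV. psi1 a b * psi1 a b) = 1"
  "(\<Sum>a\<in>UNIV. \<Sum>b\<in>UNIV. psi1 a b * psi2 a b) = 0"
  "(\<Sum>a\<in>UNIV. \<Sum>b\<in>UNIV. psi1 a b * gz a b) = 0"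
  "(\<Sum>a\<in>UNIV. \<Sum>b\<in>UNIV. psi1 a b * phi1 a b) = 0"
  "(\<Sum>a\<in>UNIV. \<Sum>b\<in>UNIV. psi1 a b * phi2 a b) = 0"
  "(\<Sum>a\<in>UNIV. \<Sum>b\<in>UNIV. psi1 a b * ysix a b) = 0"
  "(\<Sum>a\<in>UNIV. \<Sum>b\<in>UNIV. psi1 a b * yseven a b) = 0"
  "(\<Sum>a\<in>UNIV. \<Sum>b\<in>UNIV. psi1 a b * yeight a b) = 0"
  "(\<Sum>a\<in>UNIV. \<Sum>b\<in>UNIV. psi1 a b * ynine a b) = 0"
  "(\<Sum>a\<in>UNIV. \<Sum>b\<in>UNIV. psi2 a b * psi1 a b) = 0"
  "(\<Sum>a\<in>UNIV. \<Sum>b\<in>UNIV. psi2 a b * psi2 a b) = 1"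
  "(\<Sum>a\<in>UNIV. \<Sum>b\<in>UNIV. psi2 a b * gz a b) = 0"
  "(\<Sum>a\<in>UNIV. \<Sum>b\<in>UNIV. psi2 a b * phi1 a b) = 0"
  "(\<Sum>a\<in>UNIV. \<Sum>b\<in>UNIV. psi2 a b * phi2 a b) = 0"
  "(\<Sum>a\<in>UNIV. \<Sum>b\<in>UNIV. psi2 a b * ysix a b) = 0"
  "(\<Sum>a\<in>UNIV. \<Sum>b\<in>UNIV. psi2 a b * yseven a b) = 0"
  "(\<Sum>a\<in>UNIV. \<Sum>b\<in>UNIV. psi2 a b * yeight a b) = 0"
  "(\<Sum>a\<in>UNIV. \<Sum>b\<in>UNIV. psi2 a b * ynine a b) = 0"
  "(\<Sum>a\<in>UNIV. \<Sum>b\<in>UNIV. gz a b * psi1 a b) = 0"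
  "(\<Sum>a\<in>UNIV. \<Sum>b\<in>UNIV. gz a b * psi2 a b) = 0"
  "(\<Sum>a\<in>UNIV. \<Sum>b\<in>UNIV. gz a b * gz a b) = 1"
  "(\<Sum>a\<in>UNIV. \<Sum>b\<in>UNIV. gz a b * phi1 a b) = 0"
  "(\<Sum>a\<in>UNIV. \<Sum>b\<in>UNIV. gz a b * phi2 a b) = 0"
  "(\<Sum>a\<in>UNIV. \<Sum>b\<in>UNIV. gz a b * ysix a b) = 0"
  "(\<Sum>a\<in>UNIV. \<Sum>b\<in>UNIV. gz a b * yseven a b) = 0"
  "(\<Sum>a\<in>UNIV. \<Sum>b\<in>UNIV. gz a b * yeight a b) = 0"
  "(\<Sum>a\<in>UNIV. \<Sum>b\<in>UNIV. gz a b * ynine a b) = 0"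
  "(\<Sum>a\<in>UNIV. \<Sum>b\<in>UNIV. phi1 a b * psi1 a b) = 0"
  "(\<Sum>a\<in>UNIV. \<Sum>b\<in>UNIV. phi1 a b * psi2 a b) = 0"
  "(\<Sum>a\<in>UNIV. \<Sum>b\<in>UNIV. phi1 a b * gz a b) = 0"
  "(\<Sum>a\<in>UNIV. \<Sum>b\<in>UNIV. phi1 a b * phi1 a b) = 1"
  "(\<Sum>a\<in>UNIV. \<Sum>b\<in>UNIV. phi1 a b * phi2 a b) = 0"
  "(\<Sum>a\<in>UNIV. \<Sum>b\<in>UNIV. phi1 a b * ysix a b) = 0"
  "(\<Sum>a\<in>UNIV. \<Sum>b\<in>UNIV. phi1 a b * yseven a b) = 0"
  "(\<Sum>a\<in>UNIV. \<Sum>b\<in>UNIV. phi1 a b * yeight a b) = 0"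
  "(\<Sum>a\<in>UNIV. \<Sum>b\<in>UNIV. phi1 a b * ynine a b) = 0"
  "(\<Sum>a\<in>UNIV. \<Sum>b\<in>UNIV. phi2 a b * psi1 a b) = 0"
  "(\<Sum>a\<in>UNIV. \<Sum>b\<in>UNIV. phi2 a b * psi2 a b) = 0"
  "(\<Sum>a\<in>UNIV. \<Sum>b\<in>UNIV. phi2 a b * gz a b) = 0"
  "(\<Sum>a\<in>UNIV. \<Sum>b\<in>UNIV. phi2 a b * phi1 a b) = 0"
  "(\<Sum>a\<in>UNIV. \<Sum>b\<in>UNIV. phi2 a b * phi2 a b) = 1"
  "(\<Sum>a\<in>UNIV. \<Sum>b\<in>UNIV. phi2 a b * ysix a b) = 0"
  "(\<Sum>a\<in>UNIV. \<Sum>b\<in>UNIV. phi2 a b * yseven a b) = 0"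
  "(\<Sum>a\<in>UNIV. \<Sum>b\<in>UNIV. phi2 a b * yeight a b) = 0"
  "(\<Sum>a\<in>UNIV. \<Sum>b\<in>UNIV. phi2 a b * ynine a b) = 0"
  "(\<Sum>a\<in>UNIV. \<Sum>b\<in>UNIV. ysix a b * psi1 a b) = 0"
  "(\<Sum>a\<in>UNIV. \<Sum>b\<in>UNIV. ysix a b * psi2 a b) = 0"
  "(\<Sum>a\<in>UNIV. \<Sum>b\<in>UNIV. ysix a b * gz a b) = 0"
  "(\<Sum>a\<in>UNIV. \<Sum>b\<in>UNIV. ysix a b * phi1 a b) = 0"
  "(\<Sum>a\<in>UNIV. \<Sum>b\<in>UNIV. ysix a b * phi2 a b) = 0"
  "(\<Sum>a\<in>UNIV. \<Sum>b\<in>UNIV. ysix a b * ysix a b) = 1"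
  "(\<Sum>a\<in>UNIV. \<Sum>b\<in>UNIV. ysix a b * yseven a b) = 0"
  "(\<Sum>a\<in>UNIV. \<Sum>b\<in>UNIV. ysix a b * yeight a b) = 0"
  "(\<Sum>a\<in>UNIV. \<Sum>b\<in>UNIV. ysix a b * ynine a b) = 0"
  "(\<Sum>a\<in>UNIV. \<Sum>b\<in>UNIV. yseven a b * psi1 a b) = 0"
  "(\<Sum>a\<in>UNIV. \<Sum>b\<in>UNIV. yseven a b * psi2 a b) = 0"
  "(\<Sum>a\<in>UNIV. \<Sum>b\<in>UNIV. yseven a b * gz a b) = 0"
  "(\<Sum>a\<in>UNIV. \<Sum>b\<in>UNIV. yseven a b * phi1 a b) = 0"
  "(\<Sum>a\<in>UNIV. \<Sum>b\<in>UNIV. yseven a b * phi2 a b) = 0"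
  "(\<Sum>a\<in>UNIV. \<Sum>b\<in>UNIV. yseven a b * ysix a b) = 0"
  "(\<Sum>a\<in>UNIV. \<Sum>b\<in>UNIV. yseven a b * yseven a b) = 1"
  "(\<Sum>a\<in>UNIV. \<Sum>b\<in>UNIV. yseven a b * yeight a b) = 0"
  "(\<Sum>a\<in>UNIV. \<Sum>b\<in>UNIV. yseven a b * ynine a b) = 0"
  "(\<Sum>a\<in>UNIV. \<Sum>b\<in>UNIV. yeight a b * psi1 a b) = 0"
  "(\<Sum>a\<in>UNIV. \<Sum>b\<in>UNIV. yeight a b * psi2 a b) = 0"
  "(\<Sum>a\<in>UNIV. \<Sum>b\<in>UNIV. yeight a b * gz a b) = 0"
  "(\<Sum>a\<in>UNIV. \<Sum>b\<in>UNIV. yeight a b * phi1 a b) = 0"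
  "(\<Sum>a\<in>UNIV. \<Sum>b\<in>UNIV. yeight a b * phi2 a b) = 0"
  "(\<Sum>a\<in>UNIV. \<Sum>b\<in>UNIV. yeight a b * ysix a b) = 0"
  "(\<Sum>a\<in>UNIV. \<Sum>b\<in>UNIV. yeight a b * yseven a b) = 0"
  "(\<Sum>a\<in>UNIV. \<Sum>b\<in>UNIV. yeight a b * yeight a b) = 1"
  "(\<Sum>a\<in>UNIV. \<Sum>b\<in>UNIV. yeight a b * ynine a b) = 0"
  "(\<Sum>a\<in>UNIV. \<Sum>b\<in>UNIV. ynine a b * psi1 a b) = 0"
  "(\<Sum>a\<in>UNIV. \<Sum>b\<in>UNIV. ynine a b * psi2 a b) = 0"
  "(\<Sum>a\<in>UNIV. \<Sum>b\<in>UNIV. ynine a b * gz a b) = 0"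
  "(\<Sum>a\<in>UNIV. \<Sum>b\<in>UNIV. ynine a b * phi1 a b) = 0"
  "(\<Sum>a\<in>UNIV. \<Sum>b\<in>UNIV. ynine a b * phi2 a b) = 0"
  "(\<Sum>a\<in>UNIV. \<Sum>b\<in>UNIV. ynine a b * ysix a b) = 0"
  "(\<Sum>a\<in>UNIV. \<Sum>b\<in>UNIV. ynine a b * yseven a b) = 0"
  "(\<Sum>a\<in>UNIV. \<Sum>b\<in>UNIV. ynine a b * yeight a b) = 0"
  "(\<Sum>a\<in>UNIV. \<Sum>b\<in>UNIV. ynine a b * ynine a b) = 1"
  by (simp_all add: Xdefs sum_4)

lemma Xm_on: "n \<in> {1..9} \<Longrightarrow> m \<in> {1..9} \<Longrightarrow> (\<Sum>a\<in>UNIV. \<Sum>b\<in>UNIV. Xm n a b * Xm m a b) = (if n = m then 1 else 0)"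
  unfolding nat_1_9 by (elim disjE; simp only: Xm_explicit ipX; simp)

lemma Xm_sym: "n \<in> {1..9} \<Longrightarrow> Xm n a b = Xm n b a"
  unfolding nat_1_9 by (elim disjE; simp only: Xm_explicit; auto simp: Xdefs)

lemma Xm_tr: "n \<in> {1..9} \<Longrightarrow> (\<Sum>a\<in>UNIV. Xm n a a) = 0"
  unfolding nat_1_9 by (elim disjE; simp only: Xm_explicit; simp add: Xdefs sum_4)

definition Qf :: "(4 \<Rightarrow> 4 \<Rightarrow> 4 \<Rightarrow> 4 \<Rightarrow> real) \<Rightarrow> (4 \<Rightarrow> 4 \<Rightarrow> real) \<Rightarrow> real" where
  "Qf T X = (\<Sum>a\<in>UNIV. \<Sum>b\<in>UNIV. X a b * (\<Sum>c\<in>UNIV. \<Sum>d\<in>UNIV. X c d * T a c d b))"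

lemma key_identity:
  fixes T :: "4 \<Rightarrow> 4 \<Rightarrow> 4 \<Rightarrow> 4 \<Rightarrow> real"
  assumes "alg_curv T"
  shows "T 1 3 1 3 + T 1 4 1 4 + T 2 3 2 3 + T 2 4 2 4 - 2 * T 1 2 3 4 =
    2/9 * (\<Sum>n=1..9. Qf T (Xm n)) + 2/3 * (Qf T (Xm 1) + Qf T (Xm 2) + Qf T (Xm 3))"
proof -
  have s1: "\<And>i j k l. T i j k l = - T j i k l" and s2: "\<And>i j k l. T i j k l = - T i j l k"
    and s3: "\<And>i j k l. T i j k l = T k l i j" and bi: "\<And>i j k l. T i j k l + T j k i l + T k i j l = 0"
    using assms unfolding alg_curv_def by blast+
  have z1: "\<And>i k l. T i i k l = 0" using s1 by (metis add.inverse_inverse neg_equal_zero)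
  have z2: "\<And>i j k. T i j k k = 0" using s2 by (metis add.inverse_inverse neg_equal_zero)
  have f0: "T 1 1 1 1 = 0" using z1[of 1 1 1] by simp
  have f1: "T 1 1 2 2 = 0" using z1[of 1 2 2] by simp
  have f2: "T 1 1 3 3 = 0" using z1[of 1 3 3] by simp
  have f3: "T 1 1 4 4 = 0" using z1[of 1 4 4] by simp
  have f4: "T 1 2 2 1 = - T 1 2 1 2" using s2[of 1 2 2 1] by linarith
  have f5: "T 1 2 4 3 = - T 1 2 3 4" using s2[of 1 2 4 3] by linarith
  have f6: "T 1 3 3 1 = - T 1 3 1 3" using s2[of 1 3 3 1] by linarith
  have f7: "T 1 3 4 2 = - T 1 3 2 4" using s2[of 1 3 4 2] by linarith
  have f8: "T 1 4 3 2 = - T 1 4 2 3" using s2[of 1 4 3 2] by linarith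
  have f9: "T 1 4 4 1 = - T 1 4 1 4" using s2[of 1 4 4 1] by linarith
  have f10: "T 2 1 1 2 = - T 1 2 1 2" using s1[of 2 1 1 2] by linarith
  have f11: "T 2 1 2 1 = T 1 2 1 2" using s1[of 2 1 2 1] s2[of 1 2 2 1] by linarith
  have f12: "T 2 1 3 4 = - T 1 2 3 4" using s1[of 2 1 3 4] by linarith
  have f13: "T 2 1 4 3 = T 1 2 3 4" using s1[of 2 1 4 3] s2[of 1 2 4 3] by linarith
  have f14: "T 2 2 1 1 = 0" using z1[of 2 1 1] by simp
  have f15: "T 2 2 2 2 = 0" using z1[of 2 2 2] by simp
  have f16: "T 2 2 3 3 = 0" using z1[of 2 3 3] by simp
  have f17: "T 2 2 4 4 = 0" using z1[of 2 4 4] by simp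
  have f18: "T 2 3 1 4 = T 1 4 2 3" using s3[of 2 3 1 4] by linarith
  have f19: "T 2 3 3 2 = - T 2 3 2 3" using s2[of 2 3 3 2] by linarith
  have f20: "T 2 3 4 1 = - T 1 4 2 3" using s2[of 2 3 4 1] s3[of 2 3 1 4] by linarith
  have f21: "T 2 4 1 3 = T 1 3 2 4" using s3[of 2 4 1 3] by linarith
  have f22: "T 2 4 3 1 = - T 1 3 2 4" using s2[of 2 4 3 1] s3[of 2 4 1 3] by linarith
  have f23: "T 2 4 4 2 = - T 2 4 2 4" using s2[of 2 4 4 2] by linarith
  have f24: "T 3 1 1 3 = - T 1 3 1 3" using s1[of 3 1 1 3] by linarith
  have f25: "T 3 1 2 4 = - T 1 3 2 4" using s1[of 3 1 2 4] by linarith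
  have f26: "T 3 1 3 1 = T 1 3 1 3" using s1[of 3 1 3 1] s2[of 1 3 3 1] by linarith
  have f27: "T 3 1 4 2 = T 1 3 2 4" using s1[of 3 1 4 2] s2[of 1 3 4 2] by linarith
  have f28: "T 3 2 1 4 = - T 1 4 2 3" using s1[of 3 2 1 4] s3[of 2 3 1 4] by linarith
  have f29: "T 3 2 2 3 = - T 2 3 2 3" using s1[of 3 2 2 3] by linarith
  have f30: "T 3 2 3 2 = T 2 3 2 3" using s1[of 3 2 3 2] s2[of 2 3 3 2] by linarith
  have f31: "T 3 2 4 1 = T 1 4 2 3" using s1[of 3 2 4 1] s2[of 2 3 4 1] s3[of 2 3 1 4] by linarith
  have f32: "T 3 3 1 1 = 0" using z1[of 3 1 1] by simp
  have f33: "T 3 3 2 2 = 0" using z1[of 3 2 2] by simp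
  have f34: "T 3 3 3 3 = 0" using z1[of 3 3 3] by simp
  have f35: "T 3 3 4 4 = 0" using z1[of 3 4 4] by simp
  have f36: "T 3 4 1 2 = T 1 2 3 4" using s3[of 3 4 1 2] by linarith
  have f37: "T 3 4 2 1 = - T 1 2 3 4" using s2[of 3 4 2 1] s3[of 3 4 1 2] by linarith
  have f38: "T 3 4 4 3 = - T 3 4 3 4" using s2[of 3 4 4 3] by linarith
  have f39: "T 4 1 1 4 = - T 1 4 1 4" using s1[of 4 1 1 4] by linarith
  have f40: "T 4 1 2 3 = - T 1 4 2 3" using s1[of 4 1 2 3] by linarith
  have f41: "T 4 1 3 2 = T 1 4 2 3" using s1[of 4 1 3 2] s2[of 1 4 3 2] by linarith
  have f42: "T 4 1 4 1 = T 1 4 1 4" using s1[of 4 1 4 1] s2[of 1 4 4 1] by linarith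
  have f43: "T 4 2 1 3 = - T 1 3 2 4" using s1[of 4 2 1 3] s3[of 2 4 1 3] by linarith
  have f44: "T 4 2 2 4 = - T 2 4 2 4" using s1[of 4 2 2 4] by linarith
  have f45: "T 4 2 3 1 = T 1 3 2 4" using s1[of 4 2 3 1] s2[of 2 4 3 1] s3[of 2 4 1 3] by linarith
  have f46: "T 4 2 4 2 = T 2 4 2 4" using s1[of 4 2 4 2] s2[of 2 4 4 2] by linarith
  have f47: "T 4 3 1 2 = - T 1 2 3 4" using s1[of 4 3 1 2] s3[of 3 4 1 2] by linarith
  have f48: "T 4 3 2 1 = T 1 2 3 4" using s1[of 4 3 2 1] s2[of 3 4 2 1] s3[of 3 4 1 2] by linarith
  have f49: "T 4 3 3 4 = - T 3 4 3 4" using s1[of 4 3 3 4] by linarith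
  have f50: "T 4 3 4 3 = T 3 4 3 4" using s1[of 4 3 4 3] s2[of 3 4 4 3] by linarith
  have f51: "T 4 4 1 1 = 0" using z1[of 4 1 1] by simp
  have f52: "T 4 4 2 2 = 0" using z1[of 4 2 2] by simp
  have f53: "T 4 4 3 3 = 0" using z1[of 4 3 3] by simp
  have f54: "T 4 4 4 4 = 0" using z1[of 4 4 4] by simp
  note ff = f0 f1 f2 f3 f4 f5 f6 f7 f8 f9 f10 f11 f12 f13 f14 f15 f16 f17 f18 f19 f20 f21 f22 f23 f24 f25 f26 f27 f28 f29 f30 f31 f32 f33 f34 f35 f36 f37 f38 f39 f40 f41 f42 f43 f44 f45 f46 f47 f48 f49 f50 f51 f52 f53 f54
  have b0: "T 1 2 3 4 + T 2 3 1 4 + T 3 1 2 4 = 0" by (rule bi)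
  have b: "T 1 2 3 4 + T 1 4 2 3 - T 1 3 2 4 = 0" using b0 by (simp add: ff)
  have s9: "(\<Sum>n=1..9. Qf T (Xm n)) = Qf T (Xm 1) + Qf T (Xm 2) + Qf T (Xm 3) + Qf T (Xm 4) + Qf T (Xm 5)
     + Qf T (Xm 6) + Qf T (Xm 7) + Qf T (Xm 8) + Qf T (Xm 9)"
    by (simp add: numeral_eq_Suc)
  have q1: "Qf T psi1 = (-1) * T 1 2 3 4 + (1/2) * T 1 3 1 3 + (1) * T 1 4 2 3 + (1/2) * T 2 4 2 4"
    unfolding Qf_def psi1_def by (simp add: sum_4 ff; simp add: field_simps)
  have q2: "Qf T psi2 = (-1) * T 1 2 3 4 + (-1) * T 1 3 2 4 + (1/2) * T 1 4 1 4 + (1/2) * T 2 3 2 3"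
    unfolding Qf_def psi2_def by (simp add: sum_4 ff; simp add: field_simps)
  have q3: "Qf T gz = (-1/2) * T 1 2 1 2 + (1/2) * T 1 3 1 3 + (1/2) * T 1 4 1 4 + (1/2) * T 2 3 2 3 + (1/2) * T 2 4 2 4 + (-1/2) * T 3 4 3 4"
    unfolding Qf_def gz_def by (simp add: sum_4 ff; simp add: field_simps)
  have q4: "Qf T phi1 = (1) * T 1 2 3 4 + (1/2) * T 1 3 1 3 + (-1) * T 1 4 2 3 + (1/2) * T 2 4 2 4"
    unfolding Qf_def phi1_def by (simp add: sum_4 ff; simp add: field_simps)
  have q5: "Qf T phi2 = (1) * T 1 2 3 4 + (1) * T 1 3 2 4 + (1/2) * T 1 4 1 4 + (1/2) * T 2 3 2 3"
    unfolding Qf_def phi2_def by (simp add: sum_4 ff; simp add: field_simps)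
  have q6: "Qf T ysix = (1/2) * T 1 2 1 2 + (-1) * T 1 3 2 4 + (-1) * T 1 4 2 3 + (1/2) * T 3 4 3 4"
    unfolding Qf_def ysix_def by (simp add: sum_4 ff; simp add: field_simps)
  have q7: "Qf T yseven = (1/2) * T 1 2 1 2 + (1) * T 1 3 2 4 + (1) * T 1 4 2 3 + (1/2) * T 3 4 3 4"
    unfolding Qf_def yseven_def by (simp add: sum_4 ff; simp add: field_simps)
  have q8: "Qf T yeight = (1/2) * T 1 2 1 2 + (-1/2) * T 1 3 1 3 + (1/2) * T 1 4 1 4 + (1/2) * T 2 3 2 3 + (-1/2) * T 2 4 2 4 + (1/2) * T 3 4 3 4"
    unfolding Qf_def yeight_def by (simp add: sum_4 ff; simp add: field_simps)
  have q9: "Qf T ynine = (1/2) * T 1 2 1 2 + (1/2) * T 1 3 1 3 + (-1/2) * T 1 4 1 4 + (-1/2) * T 2 3 2 3 + (1/2) * T 2 4 2 4 + (1/2) * T 3 4 3 4"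
    unfolding Qf_def ynine_def by (simp add: sum_4 ff; simp add: field_simps)
  have b': "T 1 4 2 3 = T 1 3 2 4 - T 1 2 3 4" using b by simp
  show ?thesis unfolding s9 Xm_explicit q1 q2 q3 q4 q5 q6 q7 q8 q9 b' by (simp add: field_simps)
qed


lemma pes_case:
  fixes k :: nat
  assumes "of_int \<lfloor>\<alpha>\<rfloor> = real k"
  shows "partial_eig_sum lam \<alpha> = (\<Sum>i = 1..k. lam i) + (\<alpha> - real k) * lam (k + 1)"
proof -
  have "\<lfloor>\<alpha>\<rfloor> = int k" using assms by linarith
  then show ?thesis unfolding partial_eig_sum_def by simp
qed

lemma floor_cases:
  fixes \<alpha> :: real
  assumes "1 \<le> \<alpha>" "\<alpha> < 9"
  shows "\<exists>k::nat. 1 \<le> k \<and> k \<le> 8 \<and> of_int \<lfloor>\<alpha>\<rfloor> = real k \<and> real k \<le> \<alpha> \<and> \<alpha> < real k + 1"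
proof -
  have "1 \<le> \<lfloor>\<alpha>\<rfloor>" "\<lfloor>\<alpha>\<rfloor> \<le> 8" using assms by linarith+
  then show ?thesis
    by (intro exI[of _ "nat \<lfloor>\<alpha>\<rfloor>"]) linarith
qed

lemma conv_main:
  fixes lam :: "nat \<Rightarrow> real"
  assumes sorted: "\<And>a b. 1 \<le> a \<Longrightarrow> a \<le> b \<Longrightarrow> b \<le> 9 \<Longrightarrow> lam a \<le> lam b"
    and a1: "1 \<le> \<alpha>" and a9: "\<alpha> < 9"
  shows "(\<alpha> \<le> 3 \<longrightarrow> 3 * partial_eig_sum lam \<alpha> \<le> \<alpha> * (lam 1 + lam 2 + lam 3)) \<and>
         (3 \<le> \<alpha> \<longrightarrow> 6 * partial_eig_sum lam \<alpha> \<le> (9 - \<alpha>) * (lam 1 + lam 2 + lam 3) + (\<alpha> - 3) * (\<Sum>i=1..9. lam i))"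
proof -
  obtain k :: nat where k: "1 \<le> k" "k \<le> 8" "of_int \<lfloor>\<alpha>\<rfloor> = real k" "real k \<le> \<alpha>" "\<alpha> < real k + 1"
    using floor_cases[OF a1 a9] by blast
  define t where "t = \<alpha> - real k"
  have t0: "0 \<le> t" and t1: "t \<le> 1" using k unfolding t_def by auto
  have P: "partial_eig_sum lam \<alpha> = (\<Sum>i = 1..k. lam i) + t * lam (k + 1)"
    unfolding t_def by (rule pes_case[OF k(3)])
  have al: "\<alpha> = real k + t" unfolding t_def by simp
  have s: "lam 1 \<le> lam 2" "lam 2 \<le> lam 3" "lam 3 \<le> lam 4" "lam 4 \<le> lam 5" "lam 5 \<le> lam 6"
    "lam 6 \<le> lam 7" "lam 7 \<le> lam 8" "lam 8 \<le> lam 9" using sorted by auto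
  have st: "t * lam 1 \<le> t * lam 2" "t * lam 2 \<le> t * lam 3" "t * lam 3 \<le> t * lam 4" "t * lam 4 \<le> t * lam 5" "t * lam 5 \<le> t * lam 6"
    "t * lam 6 \<le> t * lam 7" "t * lam 7 \<le> t * lam 8" "t * lam 8 \<le> t * lam 9"
    using s t0 by (auto intro: mult_left_mono)
  have su: "lam i - t * lam i \<le> lam j - t * lam j" if "lam i \<le> lam j" for i j
  proof -
    have "(1 - t) * lam i \<le> (1 - t) * lam j" using that t1 by (intro mult_left_mono) auto
    then show ?thesis by (simp add: algebra_simps)
  qed
  note su8 = su[OF s(1)] su[OF s(2)] su[OF s(3)] su[OF s(4)] su[OF s(5)] su[OF s(6)] su[OF s(7)] su[OF s(8)]
  have k8: "k = 1 \<or> k = 2 \<or> k = 3 \<or> k = 4 \<or> k = 5 \<or> k = 6 \<or> k = 7 \<or> k = 8" using k by auto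
  have s9: "(\<Sum>i=1..9. lam i) = lam 1 + lam 2 + lam 3 + lam 4 + lam 5 + lam 6 + lam 7 + lam 8 + lam 9"
    by (simp add: numeral_eq_Suc)
  show ?thesis
    using k8
  proof (elim disjE)
    assume "k = 1"
    then show ?thesis unfolding P s9 unfolding al using s st su8 t0 t1 by (simp add: algebra_simps numeral_eq_Suc; linarith)
  next
    assume "k = 2"
    then show ?thesis unfolding P s9 unfolding al using s st su8 t0 t1 by (simp add: algebra_simps numeral_eq_Suc; linarith)
  next
    assume "k = 3"
    then show ?thesis unfolding P s9 unfolding al using s st su8 t0 t1 by (simp add: algebra_simps numeral_eq_Suc; linarith)
  next
    assume "k = 4"
    then show ?thesis unfolding P s9 unfolding al using s st su8 t0 t1 by (simp add: algebra_simps numeral_eq_Suc; linarith)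
  next
    assume "k = 5"
    then show ?thesis unfolding P s9 unfolding al using s st su8 t0 t1 by (simp add: algebra_simps numeral_eq_Suc; linarith)
  next
    assume "k = 6"
    then show ?thesis unfolding P s9 unfolding al using s st su8 t0 t1 by (simp add: algebra_simps numeral_eq_Suc; linarith)
  next
    assume "k = 7"
    then show ?thesis unfolding P s9 unfolding al using s st su8 t0 t1 by (simp add: algebra_simps numeral_eq_Suc; linarith)
  next
    assume "k = 8"
    then show ?thesis unfolding P s9 unfolding al using s st su8 t0 t1 by (simp add: algebra_simps numeral_eq_Suc; linarith)
  qed
qed


lemma cone_reduce:
  fixes lam :: "nat \<Rightarrow> real" and \<alpha> :: real
  assumes sorted: "\<And>a b. 1 \<le> a \<Longrightarrow> a \<le> b \<Longrightarrow> b \<le> 9 \<Longrightarrow> lam a \<le> lam b"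
  defines "S3 \<equiv> lam 1 + lam 2 + lam 3" and "av \<equiv> avg_eig lam" and "P \<equiv> partial_eig_sum lam \<alpha>"
  shows "((1 \<le> \<alpha> \<and> \<alpha> \<le> 3 \<and> P / \<alpha> \<ge> - 1 * av) \<or> (3 \<le> \<alpha> \<and> \<alpha> < 9 \<and> P / \<alpha> \<ge> - (9/\<alpha> - 2) * av)) \<longrightarrow> S3 \<ge> - 3 * av"
    and "((1 \<le> \<alpha> \<and> \<alpha> \<le> 3 \<and> P / \<alpha> > - 1 * av) \<or> (3 \<le> \<alpha> \<and> \<alpha> < 9 \<and> P / \<alpha> > - (9/\<alpha> - 2) * av)) \<longrightarrow> S3 > - 3 * av"
proof -
  have s9: "(\<Sum>i=1..9. lam i) = 9 * av" unfolding av_def avg_eig_def by simp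
  have c1: "1 \<le> \<alpha> \<Longrightarrow> \<alpha> \<le> 3 \<Longrightarrow> 3 * P \<le> \<alpha> * S3"
    using conv_main[of lam \<alpha>] sorted unfolding S3_def P_def by auto
  have c2: "3 \<le> \<alpha> \<Longrightarrow> \<alpha> < 9 \<Longrightarrow> 6 * P \<le> (9 - \<alpha>) * S3 + (\<alpha> - 3) * (9 * av)"
    using conv_main[of lam \<alpha>] sorted unfolding S3_def P_def s9[symmetric] by auto
  have A1: "S3 \<ge> - 3 * av" if "1 \<le> \<alpha>" "\<alpha> \<le> 3" "P / \<alpha> \<ge> - 1 * av"
  proof -
    have "P \<ge> - \<alpha> * av" using that by (simp add: pos_le_divide_eq mult.commute)
    then have "\<alpha> * (- 3 * av) \<le> \<alpha> * S3" using c1[OF that(1,2)] by (simp add: algebra_simps)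
    then show ?thesis using that(1) by (auto intro: mult_left_le_imp_le)
  qed
  have A1s: "S3 > - 3 * av" if "1 \<le> \<alpha>" "\<alpha> \<le> 3" "P / \<alpha> > - 1 * av"
  proof -
    have "P > - \<alpha> * av" using that by (simp add: pos_less_divide_eq mult.commute)
    then have "\<alpha> * (- 3 * av) < \<alpha> * S3" using c1[OF that(1,2)] by (simp add: algebra_simps)
    then show ?thesis using that(1) by (auto intro: mult_left_less_imp_less)
  qed
  have A2: "S3 \<ge> - 3 * av" if "3 \<le> \<alpha>" "\<alpha> < 9" "P / \<alpha> \<ge> - (9/\<alpha> - 2) * av"
  proof -
    have "P \<ge> \<alpha> * (- (9/\<alpha> - 2) * av)" using that by (simp add: pos_le_divide_eq mult.commute)
    also have "\<alpha> * (- (9/\<alpha> - 2) * av) = (2 * \<alpha> - 9) * av" using that by (simp add: field_simps)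
    finally have "P \<ge> (2 * \<alpha> - 9) * av" .
    then have "(9 - \<alpha>) * (- 3 * av) \<le> (9 - \<alpha>) * S3" using c2[OF that(1,2)] by (simp add: algebra_simps)
    then show ?thesis using that(2) by (auto intro: mult_left_le_imp_le)
  qed
  have A2s: "S3 > - 3 * av" if "3 \<le> \<alpha>" "\<alpha> < 9" "P / \<alpha> > - (9/\<alpha> - 2) * av"
  proof -
    have "P > \<alpha> * (- (9/\<alpha> - 2) * av)" using that by (simp add: pos_less_divide_eq mult.commute)
    also have "\<alpha> * (- (9/\<alpha> - 2) * av) = (2 * \<alpha> - 9) * av" using that by (simp add: field_simps)
    finally have "P > (2 * \<alpha> - 9) * av" .
    then have "(9 - \<alpha>) * (- 3 * av) < (9 - \<alpha>) * S3" using c2[OF that(1,2)] by (simp add: algebra_simps)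
    then show ?thesis using that(2) by (auto intro: mult_left_less_imp_less)
  qed
  show "((1 \<le> \<alpha> \<and> \<alpha> \<le> 3 \<and> P / \<alpha> \<ge> - 1 * av) \<or> (3 \<le> \<alpha> \<and> \<alpha> < 9 \<and> P / \<alpha> \<ge> - (9/\<alpha> - 2) * av)) \<longrightarrow> S3 \<ge> - 3 * av"
    using A1 A2 by blast
  show "((1 \<le> \<alpha> \<and> \<alpha> \<le> 3 \<and> P / \<alpha> > - 1 * av) \<or> (3 \<le> \<alpha> \<and> \<alpha> < 9 \<and> P / \<alpha> > - (9/\<alpha> - 2) * av)) \<longrightarrow> S3 > - 3 * av"
    using A1s A2s by blast
qed


definition Es :: "4 \<Rightarrow> 4 \<Rightarrow> mat4" where
  "Es p q = (\<chi> i j. if (i = p \<and> j = q) \<or> (i = q \<and> j = p) then 1 else 0)"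
definition Dg :: "4 \<Rightarrow> mat4" where
  "Dg p = (\<chi> i j. if i = j \<and> i = 1 then 1 else if i = j \<and> i = p then -1 else 0)"

lemma S20_decomp:
  assumes "S20 h"
  shows "h = h$1$2 *\<^sub>R Es 1 2 + h$1$3 *\<^sub>R Es 1 3 + h$1$4 *\<^sub>R Es 1 4 + h$2$3 *\<^sub>R Es 2 3
    + h$2$4 *\<^sub>R Es 2 4 + h$3$4 *\<^sub>R Es 3 4 + (- h$2$2) *\<^sub>R Dg 2 + (- h$3$3) *\<^sub>R Dg 3 + (- h$4$4) *\<^sub>R Dg 4"
proof -
  have sy: "\<And>i j. h$i$j = h$j$i" and tr: "(\<Sum>i\<in>UNIV. h$i$i) = 0" using assms unfolding S20_def by blast+
  have s: "h$2$1 = h$1$2" "h$3$1 = h$1$3" "h$4$1 = h$1$4" "h$3$2 = h$2$3" "h$4$2 = h$2$4" "h$4$3 = h$3$4"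
    using sy[of 2 1] sy[of 3 1] sy[of 4 1] sy[of 3 2] sy[of 4 2] sy[of 4 3] by simp_all
  have t: "h$1$1 = - h$2$2 - h$3$3 - h$4$4" using tr by (simp add: sum_4)
  have "h$i$j = (h$1$2 *\<^sub>R Es 1 2 + h$1$3 *\<^sub>R Es 1 3 + h$1$4 *\<^sub>R Es 1 4 + h$2$3 *\<^sub>R Es 2 3
    + h$2$4 *\<^sub>R Es 2 4 + h$3$4 *\<^sub>R Es 3 4 + (- h$2$2) *\<^sub>R Dg 2 + (- h$3$3) *\<^sub>R Dg 3 + (- h$4$4) *\<^sub>R Dg 4)$i$j" for i j
  proof -
    have "i = 1 \<or> i = 2 \<or> i = 3 \<or> i = 4" "j = 1 \<or> j = 2 \<or> j = 3 \<or> j = 4"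
      using exhaust_4 by blast+
    then show ?thesis using s t by (elim disjE; simp add: Es_def Dg_def)
  qed
  then show ?thesis unfolding vec_eq_iff by blast
qed

lemma dim_S20_le: "dim {h. S20 h} \<le> 9"
proof -
  define L where "L = [Es 1 2, Es 1 3, Es 1 4, Es 2 3, Es 2 4, Es 3 4, Dg 2, Dg 3, Dg 4]"
  have "{h. S20 h} \<subseteq> span (set L)"
  proof
    fix h assume "h \<in> {h. S20 h}"
    then have "S20 h" by simp
    note d = S20_decomp[OF this]
    show "h \<in> span (set L)"
      by (subst d) (intro span_add span_scale span_base; simp add: L_def)
  qed
  then have "dim {h. S20 h} \<le> card (set L)" by (rule dim_le_card) simp
  also have "\<dots> \<le> length L" by (rule card_length)
  finally show ?thesis by (simp add: L_def)
qed

definition fr :: "real^4 \<Rightarrow> real^4 \<Rightarrow> real^4 \<Rightarrow> real^4 \<Rightarrow> 4 \<Rightarrow> real^4" where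
  "fr e1 e2 e3 e4 a = (if a = 1 then e1 else if a = 2 then e2 else if a = 3 then e3 else e4)"

lemma all_less_4: "(\<forall>a<(4::nat). P a) \<longleftrightarrow> P 0 \<and> P 1 \<and> P 2 \<and> P 3"
  by (auto simp: less_Suc_eq numeral_eq_Suc)

lemma fr_on:
  assumes "orthonormal4 e1 e2 e3 e4"
  shows "fr e1 e2 e3 e4 a \<bullet> fr e1 e2 e3 e4 b = (if a = b then 1 else 0)"
proof -
  have o: "e1 \<bullet> e1 = 1" "e2 \<bullet> e2 = 1" "e3 \<bullet> e3 = 1" "e4 \<bullet> e4 = 1"
    "e1 \<bullet> e2 = 0" "e1 \<bullet> e3 = 0" "e1 \<bullet> e4 = 0" "e2 \<bullet> e3 = 0" "e2 \<bullet> e4 = 0" "e3 \<bullet> e4 = 0"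
    using assms unfolding orthonormal4_def Let_def all_less_4 by simp_all
  have "a = 1 \<or> a = 2 \<or> a = 3 \<or> a = 4" "b = 1 \<or> b = 2 \<or> b = 3 \<or> b = 4"
    using exhaust_4 by blast+
  then show ?thesis
    by (elim disjE; simp add: fr_def o inner_commute)
qed

lemma alg_curv_frame:
  assumes "alg_curv R"
  shows "alg_curv (\<lambda>a b c d. curv_eval R (f a) (f b) (f c) (f d))"
  unfolding alg_curv_def
proof (intro allI conjI)
  fix i j k l
  show "curv_eval R (f i) (f j) (f k) (f l) = - curv_eval R (f j) (f i) (f k) (f l)" by (rule curv_swap12[OF assms])
  show "curv_eval R (f i) (f j) (f k) (f l) = - curv_eval R (f i) (f j) (f l) (f k)" by (rule curv_swap34[OF assms])
  show "curv_eval R (f i) (f j) (f k) (f l) = curv_eval R (f k) (f l) (f i) (f j)" by (rule curv_pair[OF assms])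
  show "curv_eval R (f i) (f j) (f k) (f l) + curv_eval R (f j) (f k) (f i) (f l) + curv_eval R (f k) (f i) (f j) (f l) = 0"
    by (rule curv_bianchi[OF assms])
qed

lemma kyfan3:
  fixes H G :: "nat \<Rightarrow> 'a::euclidean_space"
  assumes V: "subspace V" and dimV: "dim V \<le> 9"
    and HV: "\<forall>i\<in>{1..9}. H i \<in> V" and on: "\<forall>i\<in>{1..9}. \<forall>j\<in>{1..9}. H i \<bullet> H j = (if i = j then 1 else 0)"
    and GV: "\<forall>i\<in>{1..9}. G i \<in> V" and onG: "\<forall>i\<in>{1..9}. \<forall>j\<in>{1..9}. G i \<bullet> G j = (if i = j then 1 else 0)"
    and lin: "linear A" and eig: "\<forall>i\<in>{1..9}. A (H i) = lam i *\<^sub>R H i"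
    and sorted: "\<And>a b. 1 \<le> a \<Longrightarrow> a \<le> b \<Longrightarrow> b \<le> 9 \<Longrightarrow> lam a \<le> lam b"
  shows "A (G 1) \<bullet> G 1 + A (G 2) \<bullet> G 2 + A (G 3) \<bullet> G 3 \<ge> lam 1 + lam 2 + lam 3"
proof -
  have dimV': "dim V \<le> card {1..9::nat}" using dimV by simp
  define m where "m a = (if a \<in> {1..9} then (\<Sum>b\<in>{1..3}. (G b \<bullet> H a)^2) else 0)" for a
  have Q: "A (G b) \<bullet> G b = (\<Sum>a\<in>{1..9}. lam a * (G b \<bullet> H a)^2)" if "b \<in> {1..9}" for b
    using complete_rayleigh[OF V dimV' _ HV on lin eig] GV that by auto
  have "A (G 1) \<bullet> G 1 + A (G 2) \<bullet> G 2 + A (G 3) \<bullet> G 3 = (\<Sum>b\<in>{1..3}. A (G b) \<bullet> G b)"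
    by (simp add: numeral_eq_Suc)
  also have "\<dots> = (\<Sum>b\<in>{1..3}. \<Sum>a\<in>{1..9}. lam a * (G b \<bullet> H a)^2)"
    using Q by (intro sum.cong) auto
  also have "\<dots> = (\<Sum>a\<in>{1..9}. lam a * m a)"
    by (subst sum.swap) (simp add: m_def sum_distrib_left)
  finally have eq: "A (G 1) \<bullet> G 1 + A (G 2) \<bullet> G 2 + A (G 3) \<bullet> G 3 = (\<Sum>a=1..9. lam a * m a)" .
  have m0: "0 \<le> m a" for a unfolding m_def by (auto intro: sum_nonneg)
  have m1: "m a \<le> 1" for a
  proof (cases "a \<in> {1..9}")
    case True
    have "(\<Sum>b\<in>{1..3}. (G b \<bullet> H a)^2) \<le> (\<Sum>b\<in>{1..9}. (G b \<bullet> H a)^2)"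
      by (intro sum_mono2) auto
    also have "\<dots> = H a \<bullet> H a"
      using complete_parseval[OF V dimV' _ GV onG, of "H a" "H a"] HV True
      by (simp add: power2_eq_square inner_commute)
    also have "\<dots> = 1" using on True by simp
    finally show ?thesis using True unfolding m_def by simp
  qed (auto simp: m_def)
  have ms: "(\<Sum>a=1..9. m a) = 3"
  proof -
    have "(\<Sum>a=1..9. m a) = (\<Sum>a\<in>{1..9}. \<Sum>b\<in>{1..3}. (G b \<bullet> H a)^2)"
      unfolding m_def by simp
    also have "\<dots> = (\<Sum>b\<in>{1..3}. \<Sum>a\<in>{1..9}. (G b \<bullet> H a)^2)" by (rule sum.swap)
    also have "\<dots> = (\<Sum>b\<in>{1..3::nat}. 1)"
    proof (intro sum.cong refl)
      fix b :: nat assume b: "b \<in> {1..3}"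
      have "G b \<bullet> G b = (\<Sum>a\<in>{1..9}. (G b \<bullet> H a) * (G b \<bullet> H a))"
        using complete_parseval[OF V dimV' _ HV on, of "G b" "G b"] GV b by auto
      then show "(\<Sum>a\<in>{1..9}. (G b \<bullet> H a)^2) = 1" using onG b by (simp add: power2_eq_square)
    qed
    also have "\<dots> = 3" by simp
    finally show ?thesis .
  qed
  show ?thesis unfolding eq by (rule weighted_ge3[OF sorted m0 m1 ms])
qed


lemma master:
  assumes ac: "alg_curv R" and so: "sym_op_S20 (Rring R)" and on4: "orthonormal4 e1 e2 e3 e4"
  shows "\<exists>lam. sorted_eigenvalues (Rring R) lam \<and>
    2 * avg_eig lam + 2/3 * (lam 1 + lam 2 + lam 3) \<le> isotropic_expr R e1 e2 e3 e4"
proof -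
  define V where "V = {h. S20 h}"
  define A where "A = Rring R"
  have Vs: "subspace V" unfolding V_def by (rule S20_subspace)
  have lin: "linear A" unfolding A_def by (rule linear_Rring)
  have inv: "A x \<in> V" if "x \<in> V" for x
    using so that unfolding sym_op_S20_def V_def A_def by blast
  have sym: "A x \<bullet> y = x \<bullet> A y" if "x \<in> V" "y \<in> V" for x y
    using so that unfolding sym_op_S20_def V_def A_def mat_inner_eq by blast
  define f where "f = fr e1 e2 e3 e4"
  have fon: "\<And>a b. f a \<bullet> f b = (if a = b then 1 else 0)" unfolding f_def by (rule fr_on[OF on4])
  define G where "G n = conjm f (Xm n)" for n
  have GV: "\<forall>n\<in>{1..9}. G n \<in> V"
    unfolding G_def V_def using conjm_S20[OF fon] Xm_sym Xm_tr by blast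
  have Gon: "\<forall>n\<in>{1..9}. \<forall>m\<in>{1..9}. G n \<bullet> G m = (if n = m then 1 else 0)"
    unfolding G_def using conjm_inner[OF fon] Xm_on by simp
  have dle: "dim V \<le> 9" unfolding V_def by (rule dim_S20_le)
  have dle': "dim V \<le> card {1..9::nat}" using dle by simp
  have dge: "9 \<le> dim V"
  proof -
    have inj: "inj_on G {1..9}"
    proof (rule inj_onI)
      fix i j assume ij: "i \<in> {1..9::nat}" "j \<in> {1..9}" "G i = G j"
      then have "G i \<bullet> G j = 1" using Gon by auto
      then show "i = j" using Gon ij(1,2) by (auto split: if_splits)
    qed
    have "pairwise orthogonal (G ` {1..9})"
      unfolding pairwise_def orthogonal_def using Gon by auto
    moreover have "0 \<notin> G ` {1..9}" using Gon by fastforce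
    ultimately have "independent (G ` {1..9})" by (rule pairwise_orthogonal_independent)
    then have "card (G ` {1..9}) \<le> dim V"
      by (intro independent_card_le_dim) (use GV in auto)
    then show ?thesis using card_image[OF inj] by simp
  qed
  obtain H0 lam0 where H0V: "\<forall>i<(9::nat). H0 i \<in> V \<and> A (H0 i) = lam0 i *\<^sub>R H0 i"
    and H0on: "\<forall>i<(9::nat). \<forall>j<(9::nat). H0 i \<bullet> H0 j = (if i = j then 1 else 0)"
    and H0min: "\<forall>i<(9::nat). \<forall>x\<in>V. (\<forall>j<i. x \<bullet> H0 j = 0) \<longrightarrow> lam0 i * (x \<bullet> x) \<le> A x \<bullet> x"
    using spectral_step[where V=V and A=A and k="9::nat", OF Vs lin inv sym dge] by blast
  define H where "H a = H0 (a - 1)" for a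
  define lam where "lam a = lam0 (a - 1)" for a
  have HV: "\<forall>a\<in>{1..9}. H a \<in> V" and eig: "\<forall>a\<in>{1..9}. A (H a) = lam a *\<^sub>R H a"
    using H0V unfolding H_def lam_def by auto
  have Hon: "\<forall>a\<in>{1..9}. \<forall>b\<in>{1..9}. H a \<bullet> H b = (if a = b then 1 else 0)"
  proof (intro ballI)
    fix a b :: nat assume "a \<in> {1..9}" "b \<in> {1..9}"
    then have "a - 1 < 9" "b - 1 < 9" "(a - 1 = b - 1) = (a = b)" by auto
    then show "H a \<bullet> H b = (if a = b then 1 else 0)" using H0on unfolding H_def by simp
  qed
  have sorted: "lam a \<le> lam b" if "1 \<le> a" "a \<le> b" "b \<le> 9" for a b
  proof -
    define x where "x = H0 (b - 1)"
    have xV: "x \<in> V" and Ax: "A x = lam0 (b - 1) *\<^sub>R x" using H0V that unfolding x_def by auto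
    have xx: "x \<bullet> x = 1" using H0on that unfolding x_def by auto
    have "\<forall>j<a - 1. x \<bullet> H0 j = 0" using H0on that unfolding x_def by auto
    then have "lam0 (a - 1) * (x \<bullet> x) \<le> A x \<bullet> x" using H0min xV that by auto
    then show ?thesis using Ax xx unfolding lam_def by simp
  qed
  have se: "sorted_eigenvalues A lam"
    unfolding sorted_eigenvalues_def mat_inner_eq
    using sorted HV eig Hon unfolding V_def by (intro conjI exI[of _ H]) auto
  have trace: "(\<Sum>n\<in>{1..9}. A (G n) \<bullet> G n) = (\<Sum>a\<in>{1..9}. lam a)"
    by (rule complete_trace[OF Vs dle' _ HV Hon GV Gon lin eig]) simp
  have ky: "A (G 1) \<bullet> G 1 + A (G 2) \<bullet> G 2 + A (G 3) \<bullet> G 3 \<ge> lam 1 + lam 2 + lam 3"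
    by (rule kyfan3[OF Vs dle HV Hon GV Gon lin eig sorted])
  define T where "T a b c d = curv_eval R (f a) (f b) (f c) (f d)" for a b c d
  have acT: "alg_curv T" unfolding T_def[abs_def] by (rule alg_curv_frame[OF ac])
  have Qn: "A (G n) \<bullet> G n = Qf T (Xm n)" if "n \<in> {1..9}" for n
  proof -
    have "S20 (G n)" using GV that unfolding V_def by auto
    then have "A (G n) \<bullet> G n = Rbar R (G n) \<bullet> G n" unfolding A_def by (rule Rring_inner)
    also have "\<dots> = Qf T (Xm n)" unfolding G_def conjm_Q Qf_def T_def ..
    finally show ?thesis .
  qed
  have key: "T 1 3 1 3 + T 1 4 1 4 + T 2 3 2 3 + T 2 4 2 4 - 2 * T 1 2 3 4 =
    2/9 * (\<Sum>n=1..9. Qf T (Xm n)) + 2/3 * (Qf T (Xm 1) + Qf T (Xm 2) + Qf T (Xm 3))"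
    by (rule key_identity[OF acT])
  have iso: "isotropic_expr R e1 e2 e3 e4 = T 1 3 1 3 + T 1 4 1 4 + T 2 3 2 3 + T 2 4 2 4 - 2 * T 1 2 3 4"
    unfolding isotropic_expr_def T_def f_def fr_def by simp
  have s1: "(\<Sum>n=1..9. Qf T (Xm n)) = 9 * avg_eig lam"
  proof -
    have "(\<Sum>n=1..9. Qf T (Xm n)) = (\<Sum>n\<in>{1..9}. A (G n) \<bullet> G n)" using Qn by (intro sum.cong) auto
    then show ?thesis using trace unfolding avg_eig_def by simp
  qed
  have s2: "Qf T (Xm 1) + Qf T (Xm 2) + Qf T (Xm 3) = A (G 1) \<bullet> G 1 + A (G 2) \<bullet> G 2 + A (G 3) \<bullet> G 3"
    using Qn by simp
  have "2 * avg_eig lam + 2/3 * (lam 1 + lam 2 + lam 3) \<le> isotropic_expr R e1 e2 e3 e4"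
    unfolding iso key s1 s2 using ky by simp
  then show ?thesis using se unfolding A_def by blast
qed

theorem proposition4p2:
  fixes R :: tensor4 and \<alpha> :: real
  assumes "alg_curv R"
  shows "(((1 \<le> \<alpha> \<and> \<alpha> \<le> 3 \<and> in_cone (Rring R) \<alpha> 1) \<or>
          (3 \<le> \<alpha> \<and> \<alpha> < 9 \<and> in_cone (Rring R) \<alpha> (9 / \<alpha> - 2))) \<longrightarrow> nonneg_IC R) \<and>
         (((1 \<le> \<alpha> \<and> \<alpha> \<le> 3 \<and> in_cone_interior (Rring R) \<alpha> 1) \<or>
          (3 \<le> \<alpha> \<and> \<alpha> < 9 \<and> in_cone_interior (Rring R) \<alpha> (9 / \<alpha> - 2))) \<longrightarrow> pos_IC R)"
proof (intro conjI impI)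
  assume h: "(1 \<le> \<alpha> \<and> \<alpha> \<le> 3 \<and> in_cone (Rring R) \<alpha> 1) \<or>
          (3 \<le> \<alpha> \<and> \<alpha> < 9 \<and> in_cone (Rring R) \<alpha> (9 / \<alpha> - 2))"
  then have so: "sym_op_S20 (Rring R)" unfolding in_cone_def by blast
  show "nonneg_IC R" unfolding nonneg_IC_def
  proof (intro allI impI)
    fix e1 e2 e3 e4 assume on4: "orthonormal4 e1 e2 e3 e4"
    obtain lam where se: "sorted_eigenvalues (Rring R) lam"
      and le: "2 * avg_eig lam + 2/3 * (lam 1 + lam 2 + lam 3) \<le> isotropic_expr R e1 e2 e3 e4"
      using master[OF assms so on4] by blast
    have sorted: "\<And>a b. 1 \<le> a \<Longrightarrow> a \<le> b \<Longrightarrow> b \<le> 9 \<Longrightarrow> lam a \<le> lam b"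
      using se unfolding sorted_eigenvalues_def by blast
    have "(1 \<le> \<alpha> \<and> \<alpha> \<le> 3 \<and> partial_eig_sum lam \<alpha> / \<alpha> \<ge> - 1 * avg_eig lam) \<or>
          (3 \<le> \<alpha> \<and> \<alpha> < 9 \<and> partial_eig_sum lam \<alpha> / \<alpha> \<ge> - (9/\<alpha> - 2) * avg_eig lam)"
      using h se unfolding in_cone_def by blast
    then have "lam 1 + lam 2 + lam 3 \<ge> - 3 * avg_eig lam"
      using cone_reduce(1)[of lam \<alpha>, OF sorted] by blast
    then have "2/3 * (lam 1 + lam 2 + lam 3) \<ge> 2/3 * (- 3 * avg_eig lam)" by (intro mult_left_mono) auto
    then show "isotropic_expr R e1 e2 e3 e4 \<ge> 0" using le by linarith
  qed
next
  assume h: "(1 \<le> \<alpha> \<and> \<alpha> \<le> 3 \<and> in_cone_interior (Rring R) \<alpha> 1) \<or>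
          (3 \<le> \<alpha> \<and> \<alpha> < 9 \<and> in_cone_interior (Rring R) \<alpha> (9 / \<alpha> - 2))"
  then have so: "sym_op_S20 (Rring R)" unfolding in_cone_interior_def by blast
  show "pos_IC R" unfolding pos_IC_def
  proof (intro allI impI)
    fix e1 e2 e3 e4 assume on4: "orthonormal4 e1 e2 e3 e4"
    obtain lam where se: "sorted_eigenvalues (Rring R) lam"
      and le: "2 * avg_eig lam + 2/3 * (lam 1 + lam 2 + lam 3) \<le> isotropic_expr R e1 e2 e3 e4"
      using master[OF assms so on4] by blast
    have sorted: "\<And>a b. 1 \<le> a \<Longrightarrow> a \<le> b \<Longrightarrow> b \<le> 9 \<Longrightarrow> lam a \<le> lam b"
      using se unfolding sorted_eigenvalues_def by blast
    have "(1 \<le> \<alpha> \<and> \<alpha> \<le> 3 \<and> partial_eig_sum lam \<alpha> / \<alpha> > - 1 * avg_eig lam) \<or>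
          (3 \<le> \<alpha> \<and> \<alpha> < 9 \<and> partial_eig_sum lam \<alpha> / \<alpha> > - (9/\<alpha> - 2) * avg_eig lam)"
      using h se unfolding in_cone_interior_def by blast
    then have "lam 1 + lam 2 + lam 3 > - 3 * avg_eig lam"
      using cone_reduce(2)[of lam \<alpha>, OF sorted] by blast
    then have "2/3 * (lam 1 + lam 2 + lam 3) > 2/3 * (- 3 * avg_eig lam)" by (intro mult_strict_left_mono) auto
    then show "isotropic_expr R e1 e2 e3 e4 > 0" using le by linarith
  qed
qed


end
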